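(* Let $\mu$ be a probability measure on $\mathcal{X}$, $0\le c_1<1<c_2$ with $\frac{c_2-c_1}{1-c_1}\in\mathbb{N}$, $\tilde{\mathcal{P}}=\tilde{\mathcal{P}}_{c_1,c_2,\mu}$, $\varepsilon\ge0$ and $\delta\in[0,1]$ with $\delta\le\frac{(c_2-c_1e^\varepsilon)(1-c_1)}{c_2-c_1}$. Suppose $\mu$ is $(\alpha,\frac1\alpha,1)$-decomposable with $\alpha=\frac{1-c_1}{c_2-c_1}$. Let \[ r_1=\frac{c_1}{c_2-c_1}\cdot\frac{(1-c_1)e^\varepsilon+c_2-1}{1-\delta},\qquad r_2=\frac{c_2}{c_2-c_1}\cdot\frac{(1-c_1)e^\varepsilon+c_2-1}{e^\varepsilon+\frac{c_2-1}{1-c_1}\delta}. \] Then for every $f$-divergence, \[ \mathcal{R}(\mathcal{Q}_{\mathcal{X},\tilde{\mathcal{P}},\varepsilon,\delta},\tilde{\mathcal{P}},f)=\frac{1-r_1}{r_2-r_1}f(r_2)+\frac{r_2-1}{r_2-r_1}f(r_1). \] Moreover, with $\lambda^\star_{\varepsilon,\delta}=\frac{e^\varepsilon+\frac{c_2-c_1}{1-c_1}\delta-1}{(1-c_1)e^\varepsilon+c_2-1}$, the sampler $\mathbf{Q}^\star_{\varepsilon,\delta}(P)=\lambda^\star_{\varepsilon,\delta}P+(1-\lambda^\star_{\varepsilon,\delta})\mu$ belongs to $\mathcal{Q}_{\mathcal{X},\tilde{\mathcal{P}},\varepsilon,\delta}$ and satisfies $\sup_{P\in\tilde{\mathcal{P}}}D_f(P\|\mathbf{Q}^\star_{\varepsilon,\delta}(P))=\mathcal{R}(\mathcal{Q}_{\mathcal{X},\tilde{\mathcal{P}},\varepsilon,\delta},\tilde{\mathcal{P}},f)$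 for every $f$-divergence.
   Context: $\tilde{\mathcal{P}}_{c_1,c_2,\mu}=\{P\in\mathcal{P}(\mathcal{X}):P\ll\mu,\ c_1\le\frac{dP}{d\mu}\le c_2\ \mu\text{-a.e.}\}$. $\mu$ is $(\alpha,t,u)$-decomposable if there are measurable $A_1,\dots,A_t$ with $\mu(A_i)=\alpha$ and each point in at most $u$ of them. A sampler $\mathbf{Q}:\tilde{\mathcal{P}}\to\mathcal{P}(\mathcal{X})$ is $(\varepsilon,\delta)$-LDP if $\mathbf{Q}(A\mid P)\le e^\varepsilon\mathbf{Q}(A\mid P')+\delta$ for all $P,P'\in\tilde{\mathcal{P}}$ and measurable $A$; $\mathcal{Q}_{\mathcal{X},\tilde{\mathcal{P}},\varepsilon,\delta}$ is the set of such samplers. $D_f(P\|Q)=\int qf(p/q)\,d\nu$ for convex $f:(0,\infty)\to\mathbb{R}$, $f(1)=0$ (conventions $f(0)=\lim_{t\to0^+}f(t)$, $0f(0/0)=0$, $0f(a/0)=a\lim_{u\to\infty}f(u)/u$). $\mathcal{R}(\mathcal{Q}_{\mathcal{X},\tilde{\mathcal{P}},\varepsilon,\delta},\tilde{\mathcal{P}},f)=\inf_{\mathbf{Q}\in\mathcal{Q}_{\mathcal{X},\tilde{\mathcal{P}},\varepsilon,\delta}}\sup_{P\in\tilde{\mathcal{P}}}D_f(P\|\mathbf{Q}(P))$. *)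

theory Defs
  imports "HOL-Probability.Probability"
begin

definition Ptilde :: "real \<Rightarrow> real \<Rightarrow> 'a measure \<Rightarrow> 'a measure set" where
  "Ptilde c1 c2 \<mu> = {P. prob_space P \<and> sets P = sets \<mu> \<and> absolutely_continuous \<mu> P \<and>
      (AE x in \<mu>. ennreal c1 \<le> RN_deriv \<mu> P x \<and> RN_deriv \<mu> P x \<le> ennreal c2)}"

definition decomposable :: "'a measure \<Rightarrow> real \<Rightarrow> nat \<Rightarrow> nat \<Rightarrow> bool" where
  "decomposable \<mu> \<alpha> t u \<longleftrightarrow>
     (\<exists>A :: nat \<Rightarrow> 'a set. (\<forall>i\<in>{1..t}. A i \<in> sets \<mu> \<and> measure \<mu> (A i) = \<alpha>) \<and>
        (\<forall>x\<in>space \<mu>. card {i\<in>{1..t}. x \<in> A i} \<le> u))"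

definition samplers :: "'a measure \<Rightarrow> 'a measure set \<Rightarrow> real \<Rightarrow> real \<Rightarrow> ('a measure \<Rightarrow> 'a measure) set" where
  "samplers X PP \<epsilon> \<delta> = {Q.
      (\<forall>P\<in>PP. prob_space (Q P) \<and> sets (Q P) = sets X) \<and>
      (\<forall>P\<in>PP. \<forall>P'\<in>PP. \<forall>A\<in>sets X. measure (Q P) A \<le> exp \<epsilon> * measure (Q P') A + \<delta>)}"

text \<open>Conventions: f(0) = lim_{t->0+} f t, and f'(infinity) = lim_{u->infinity} f u / u (extended reals).\<close>
definition f_at0 :: "(real \<Rightarrow> real) \<Rightarrow> ereal" where
  "f_at0 f = Lim (at_right 0) (\<lambda>t. ereal (f t))"

definition f_slope :: "(real \<Rightarrow> real) \<Rightarrow> ereal" where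
  "f_slope f = Lim at_top (\<lambda>u. ereal (f u / u))"

definition f_ext :: "(real \<Rightarrow> real) \<Rightarrow> real \<Rightarrow> ereal" where
  "f_ext f t = (if t = 0 then f_at0 f else ereal (f t))"

definition fdiv_pt :: "(real \<Rightarrow> real) \<Rightarrow> real \<Rightarrow> real \<Rightarrow> ereal" where
  "fdiv_pt f a b =
     (if b > 0 then (if a > 0 then ereal (b * f (a / b)) else ereal b * f_at0 f)
      else (if a > 0 then ereal a * f_slope f else 0))"

definition fdiv :: "(real \<Rightarrow> real) \<Rightarrow> 'a measure \<Rightarrow> 'a measure \<Rightarrow> ereal" where
  "fdiv f P Q =
    (let \<nu> = measure_of (space P) (sets P) (\<lambda>A. emeasure P A + emeasure Q A);
         p = (\<lambda>x. enn2real (RN_deriv \<nu> P x));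
         q = (\<lambda>x. enn2real (RN_deriv \<nu> Q x));
         g = (\<lambda>x. fdiv_pt f (p x) (q x))
     in enn2ereal (\<integral>\<^sup>+ x. e2ennreal (max 0 (g x)) \<partial>\<nu>)
        - enn2ereal (\<integral>\<^sup>+ x. e2ennreal (max 0 (- g x)) \<partial>\<nu>))"

definition minimax_risk :: "'a measure \<Rightarrow> 'a measure set \<Rightarrow> real \<Rightarrow> real \<Rightarrow> (real \<Rightarrow> real) \<Rightarrow> ereal" where
  "minimax_risk X PP \<epsilon> \<delta> f = (INF Q\<in>samplers X PP \<epsilon> \<delta>. SUP P\<in>PP. fdiv f P (Q P))"

definition mixture :: "real \<Rightarrow> 'a measure \<Rightarrow> 'a measure \<Rightarrow> 'a measure" where
  "mixture l P \<mu> = measure_of (space \<mu>) (sets \<mu>)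
      (\<lambda>A. ennreal l * emeasure P A + ennreal (1 - l) * emeasure \<mu> A)"

end

theory Submission
  imports Defs
begin

lemma slope_mono:
  fixes g :: "real \<Rightarrow> real"
  assumes g: "convex_on {0<..} g" and "0 < u" "u < v" "u \<le> x" "x < y" "v \<le> y"
  shows "(g v - g u) / (v - u) \<le> (g y - g x) / (y - x)"
proof -
  have 1: "(g v - g u) / (v - u) \<le> (g y - g u) / (y - u)"
  proof (cases "v = y")
    case False
    then have "v < y" using assms by auto
    from convex_on_slope_le(1)[OF g, of u y v] this assms
    have "(g u - g v) / (u - v) \<le> (g u - g y) / (u - y)" by auto
    then show ?thesis by (smt (verit) minus_divide_divide)
  qed simp
  have 2: "(g y - g u) / (y - u) \<le> (g y - g x) / (y - x)"
  proof (cases "u = x")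
    case False
    then have "u < x" using assms by auto
    from convex_on_slope_le(2)[OF g, of u y x] this assms
    have "(g u - g y) / (u - y) \<le> (g x - g y) / (x - y)" by auto
    then show ?thesis by (smt (verit) minus_divide_divide)
  qed simp
  from 1 2 show ?thesis by linarith
qed

lemma convex_lim0:
  fixes g :: "real \<Rightarrow> real"
  assumes g: "convex_on {0<..} g"
  shows "\<exists>l. ((\<lambda>t. ereal (g t)) \<longlongrightarrow> l) (at_right 0)"
proof (cases "\<forall>x y. 0 < x \<and> x < y \<and> y < 1 \<longrightarrow> g x \<le> g y")
  case True
  define l where "l = (INF t\<in>{0<..<1::real}. ereal (g t))"
  have "((\<lambda>t. ereal (g t)) \<longlongrightarrow> l) (at_right 0)"
  proof (rule order_tendstoI)
    fix a assume "a < l"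
    have "\<forall>t\<in>{0<..<1::real}. a < ereal (g t)"
      using \<open>a < l\<close> unfolding l_def by (metis INF_lower order_less_le_trans)
    then show "\<forall>\<^sub>F t in at_right 0. a < ereal (g t)"
      using eventually_at_right_real[of 0 1] by (auto elim: eventually_mono)
  next
    fix a assume "l < a"
    then obtain t0 where t0: "t0 \<in> {0<..<1}" "ereal (g t0) < a"
      unfolding l_def by (auto simp: INF_less_iff)
    have "\<forall>\<^sub>F t in at_right 0. t \<in> {0<..<t0}"
      using t0 by (intro eventually_at_right_real) auto
    then show "\<forall>\<^sub>F t in at_right 0. ereal (g t) < a"
    proof (rule eventually_mono)
      fix t assume "t \<in> {0<..<t0}"
      then have "g t \<le> g t0" using True t0 by auto
      then show "ereal (g t) < a" using t0 by (metis ereal_less_eq(3) order_le_less_trans)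
    qed
  qed
  then show ?thesis by blast
next
  case False
  then obtain x y where xy: "0 < x" "x < y" "y < 1" "g y < g x" by auto
  have mono: "g v \<le> g u" if "0 < u" "u < v" "v \<le> x" for u v
  proof -
    have "(g v - g u) / (v - u) \<le> (g y - g x) / (y - x)"
      using slope_mono[OF g, of u v x y] that xy by auto
    also have "\<dots> < 0" using xy by (auto simp: divide_neg_pos)
    finally show ?thesis using that by (auto simp: divide_less_0_iff)
  qed
  define l where "l = (SUP t\<in>{0<..<x}. ereal (g t))"
  have "((\<lambda>t. ereal (g t)) \<longlongrightarrow> l) (at_right 0)"
  proof (rule order_tendstoI)
    fix a assume "l < a"
    have "\<forall>t\<in>{0<..<x}. ereal (g t) < a"
      using \<open>l < a\<close> unfolding l_def by (metis SUP_upper order_le_less_trans)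
    then show "\<forall>\<^sub>F t in at_right 0. ereal (g t) < a"
      using eventually_at_right_real[of 0 x] xy by (auto elim: eventually_mono)
  next
    fix a assume "a < l"
    then obtain t0 where t0: "t0 \<in> {0<..<x}" "a < ereal (g t0)"
      unfolding l_def by (auto simp: less_SUP_iff)
    have "\<forall>\<^sub>F t in at_right 0. t \<in> {0<..<t0}"
      using t0 by (intro eventually_at_right_real) auto
    then show "\<forall>\<^sub>F t in at_right 0. a < ereal (g t)"
    proof (rule eventually_mono)
      fix t assume "t \<in> {0<..<t0}"
      then have "g t0 \<le> g t" using mono t0 by auto
      then show "a < ereal (g t)" using t0 by (metis ereal_less_eq(3) order_less_le_trans)
    qed
  qed
  then show ?thesis by blast
qed

lemma perspective_convex:
  fixes f :: "real \<Rightarrow> real"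
  assumes f: "convex_on {0<..} f"
  shows "convex_on {0<..} (\<lambda>t. t * f (1 / t))"
proof (rule convex_onI)
  show "convex {0::real<..}" by simp
next
  fix a b th :: real
  assume a: "a \<in> {0<..}" and b: "b \<in> {0<..}" and th: "0 < th" "th < 1"
  define t where "t = (1 - th) * a + th * b"
  have t: "t > 0" using a b th unfolding t_def by (auto intro: add_pos_pos)
  define w where "w = (1 - th) * a / t"
  have w: "0 \<le> w" "w \<le> 1" using t a b th unfolding w_def t_def by (auto simp: field_simps)
  have e1: "w * (1 / a) = (1 - th) / t" using a unfolding w_def by auto
  have "1 - w = (t - (1 - th) * a) / t" using t unfolding w_def by (auto simp: field_simps)
  also have "t - (1 - th) * a = th * b" unfolding t_def by simp
  finally have e2: "(1 - w) * (1 / b) = th / t" using b by auto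
  have eq: "1 / t = w * (1 / a) + (1 - w) * (1 / b)"
    unfolding e1 e2 by (simp add: add_divide_distrib[symmetric])
  have "f (1 / t) \<le> w * f (1 / a) + (1 - w) * f (1 / b)"
  proof -
    have "f ((1 - w) * (1 / b) + w * (1 / a)) \<le> (1 - w) * f (1 / b) + w * f (1 / a)"
      using convex_onD[OF f, of w "1/b" "1/a"] a b w by auto
    then show ?thesis unfolding eq by (simp add: add.commute)
  qed
  then have "t * f (1 / t) \<le> t * (w * f (1 / a) + (1 - w) * f (1 / b))"
    using t by (auto intro: mult_left_mono)
  also have "\<dots> = (t * w) * f (1 / a) + (t * (1 - w)) * f (1 / b)"
    by (simp add: algebra_simps)
  also have "t * w = (1 - th) * a" using t unfolding w_def by auto
  also have "t * (1 - w) = th * b" using t unfolding w_def t_def by (auto simp: field_simps)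
  also have "(1 - th) * a * f (1 / a) + th * b * f (1 / b) = (1 - th) * (a * f (1 / a)) + th * (b * f (1 / b))"
    by simp
  finally show "((1 - th) *\<^sub>R a + th *\<^sub>R b) * f (1 / ((1 - th) *\<^sub>R a + th *\<^sub>R b))
      \<le> (1 - th) * (a * f (1 / a)) + th * (b * f (1 / b))" by (simp add: t_def)
qed

lemma f_at0_tendsto:
  assumes f: "convex_on {0<..} f"
  shows "((\<lambda>t. ereal (f t)) \<longlongrightarrow> f_at0 f) (at_right 0)"
proof -
  obtain l where l: "((\<lambda>t. ereal (f t)) \<longlongrightarrow> l) (at_right 0)" using convex_lim0[OF f] by blast
  then have "f_at0 f = l" unfolding f_at0_def by (intro tendsto_Lim) auto
  with l show ?thesis by simp
qed

lemma f_slope_tendsto: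
  assumes f: "convex_on {0<..} f"
  shows "((\<lambda>u. ereal (f u / u)) \<longlongrightarrow> f_slope f) at_top"
proof -
  obtain l where l: "((\<lambda>t. ereal (t * f (1 / t))) \<longlongrightarrow> l) (at_right 0)"
    using convex_lim0[OF perspective_convex[OF f]] by blast
  have lim: "filterlim (\<lambda>u::real. 1 / u) (at_right 0) at_top"
    using filterlim_inverse_at_right_top by (simp add: inverse_eq_divide)
  have "((\<lambda>u. ereal ((1 / u) * f (1 / (1 / u)))) \<longlongrightarrow> l) at_top"
    using filterlim_compose[OF l lim] by (simp add: o_def)
  moreover have "\<forall>\<^sub>F u in at_top. ereal ((1 / u) * f (1 / (1 / u))) = ereal (f u / u)"
    using eventually_gt_at_top[of 0] by (auto elim: eventually_mono)
  ultimately have l2: "((\<lambda>u. ereal (f u / u)) \<longlongrightarrow> l) at_top"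
    by (rule Lim_transform_eventually)
  then have "f_slope f = l" unfolding f_slope_def by (intro tendsto_Lim) auto
  with l2 show ?thesis by simp
qed

lemma f_at0_ge:
  assumes f: "convex_on {0<..} f" and line: "\<And>t. t > 0 \<Longrightarrow> s * t + b \<le> f t"
  shows "ereal b \<le> f_at0 f"
proof (rule tendsto_le[OF _ f_at0_tendsto[OF f]])
  show "((\<lambda>t. ereal (s * t + b)) \<longlongrightarrow> ereal b) (at_right 0)"
  proof -
    have "((\<lambda>t. s * t + b) \<longlongrightarrow> s * 0 + b) (at_right 0)"
      by (intro tendsto_intros)
    then show ?thesis by (simp add: lim_ereal)
  qed
  show "\<forall>\<^sub>F t in at_right 0. ereal (s * t + b) \<le> ereal (f t)"
    using eventually_at_right_real[of 0 1] line by (auto elim: eventually_mono)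
qed simp

lemma f_slope_ge:
  assumes f: "convex_on {0<..} f" and line: "\<And>t. t > 0 \<Longrightarrow> s * t + b \<le> f t"
  shows "ereal s \<le> f_slope f"
proof (rule tendsto_le[OF _ f_slope_tendsto[OF f]])
  show "((\<lambda>t. ereal (s + b / t)) \<longlongrightarrow> ereal s) at_top"
  proof -
    have "((\<lambda>t. b / t) \<longlongrightarrow> 0) at_top"
      by (rule tendsto_divide_0[OF tendsto_const]) (rule filterlim_at_top_imp_at_infinity[OF filterlim_ident])
    then have "((\<lambda>t. s + b / t) \<longlongrightarrow> s + 0) at_top" by (intro tendsto_intros)
    then show ?thesis by (simp add: lim_ereal)
  qed
  show "\<forall>\<^sub>F t in at_top. ereal (s + b / t) \<le> ereal (f t / t)"
    using eventually_gt_at_top[of 0]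
  proof (rule eventually_mono)
    fix t :: real assume "t > 0"
    have "t * (s * t + b) \<le> t * f t" using line[of t] \<open>t > 0\<close> by (intro mult_left_mono) auto
    then show "ereal (s + b / t) \<le> ereal (f t / t)" using \<open>t > 0\<close> by (auto simp: field_simps)
  qed
qed simp

lemma chord_le:
  fixes f :: "real \<Rightarrow> real"
  assumes f: "convex_on {0<..} f" and "0 < a" "a \<le> t" "t \<le> b" "a < b"
  shows "f t \<le> f a + (f b - f a) / (b - a) * (t - a)"
proof -
  define l where "l = (t - a) / (b - a)"
  have l: "0 \<le> l" "l \<le> 1" using assms unfolding l_def by (auto simp: field_simps)
  have "l * (b - a) = t - a" using assms unfolding l_def by auto
  then have "(1 - l) * a + l * b = t" by (simp add: algebra_simps)
  then have "f t \<le> (1 - l) * f a + l * f b"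
    using convex_onD[OF f, of l a b] l assms by auto
  also have "\<dots> = f a + l * (f b - f a)" by (simp add: algebra_simps)
  also have "\<dots> = f a + (f b - f a) / (b - a) * (t - a)"
    unfolding l_def by simp
  finally show ?thesis .
qed

lemma chord_from0:
  fixes f :: "real \<Rightarrow> real"
  assumes f: "convex_on {0<..} f" and F0: "f_at0 f = ereal F0" and t: "0 < t" "t \<le> r"
  shows "f t \<le> F0 + (f r - F0) / r * t"
proof (cases "t = r")
  case True
  then show ?thesis using t by auto
next
  case False
  then have tr: "t < r" using t by auto
  have lim0: "(f \<longlongrightarrow> F0) (at_right 0)"
    using f_at0_tendsto[OF f] F0 by (simp add: lim_ereal)
  have "((\<lambda>e. f e + (f r - f e) / (r - e) * (t - e)) \<longlongrightarrow> F0 + (f r - F0) / (r - 0) * (t - 0)) (at_right 0)"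
    using t tr by (intro tendsto_intros lim0) auto
  moreover have "\<forall>\<^sub>F e in at_right 0. f t \<le> f e + (f r - f e) / (r - e) * (t - e)"
    using eventually_at_right_real[OF t(1)]
  proof (rule eventually_mono)
    fix e assume "e \<in> {0<..<t}"
    then show "f t \<le> f e + (f r - f e) / (r - e) * (t - e)"
      using chord_le[OF f, of e t r] tr by auto
  qed
  ultimately have "f t \<le> F0 + (f r - F0) / (r - 0) * (t - 0)"
    by (intro tendsto_le[OF _ _ tendsto_const]) auto
  then show ?thesis by simp
qed

lemma subgrad:
  fixes f :: "real \<Rightarrow> real"
  assumes f: "convex_on {0<..} f" and r: "0 < r"
  shows "\<exists>sl sr. sl \<le> sr \<and> (\<forall>t. 0 < t \<and> t < r \<longrightarrow> (f r - f t) / (r - t) \<le> sl)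
     \<and> (\<forall>u. r < u \<longrightarrow> sr \<le> (f u - f r) / (u - r))
     \<and> (\<forall>s t. sl \<le> s \<and> s \<le> sr \<and> 0 < t \<longrightarrow> f r + s * (t - r) \<le> f t)"
proof -
  define L where "L = (\<lambda>t. (f r - f t) / (r - t)) ` {0<..<r}"
  define R where "R = (\<lambda>u. (f u - f r) / (u - r)) ` {r<..}"
  have LR: "x \<le> y" if xL: "x \<in> L" and yR: "y \<in> R" for x y
  proof -
    obtain t where "x = (f r - f t) / (r - t)" "0 < t" "t < r"
      using xL unfolding L_def by (auto simp: image_iff)
    moreover obtain u where "y = (f u - f r) / (u - r)" "r < u"
      using yR unfolding R_def by (auto simp: image_iff)
    ultimately show ?thesis using slope_mono[OF f, of t r r u] by auto
  qed
  have Lne: "L \<noteq> {}" unfolding L_def using r by (auto intro: exI[of _ "r/2"])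
  have Rne: "R \<noteq> {}" unfolding R_def by auto
  define sl where "sl = Sup L"
  define sr where "sr = Inf R"
  have bdd1: "bdd_above L" using LR Rne by (meson bdd_above_def ex_in_conv)
  have bdd2: "bdd_below R" using LR Lne by (meson bdd_below_def ex_in_conv)
  have slL: "x \<le> sl" if "x \<in> L" for x using cSup_upper[OF that bdd1] sl_def by simp
  have srR: "sr \<le> y" if "y \<in> R" for y using cInf_lower[OF that bdd2] sr_def by simp
  have slsr: "sl \<le> sr" unfolding sl_def sr_def
    using LR Lne Rne by (meson cSup_least cInf_greatest)
  have line: "f r + s * (t - r) \<le> f t" if "sl \<le> s" "s \<le> sr" "0 < t" for s t
  proof (cases t r rule: linorder_cases)
    case less
    then have "(f r - f t) / (r - t) \<le> s" using slL[of "(f r - f t) / (r - t)"] that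
      unfolding L_def by auto
    then have "f r - f t \<le> s * (r - t)" using less by (simp add: divide_le_eq)
    then show ?thesis by (simp add: algebra_simps)
  next
    case greater
    then have "s \<le> (f t - f r) / (t - r)" using srR[of "(f t - f r) / (t - r)"] that
      unfolding R_def by auto
    then have "s * (t - r) \<le> f t - f r" using greater by (simp add: le_divide_eq)
    then show ?thesis by (simp add: algebra_simps)
  qed simp
  show ?thesis
    apply (rule exI[of _ sl], rule exI[of _ sr])
    using slsr line slL srR unfolding L_def R_def by auto
qed

definition nuM :: "'a measure \<Rightarrow> 'a measure \<Rightarrow> 'a measure" where
  "nuM P Q = measure_of (space P) (sets P) (\<lambda>A. emeasure P A + emeasure Q A)"

lemma nu_basic:
  assumes P: "finite_measure P" and Q: "finite_measure Q" and sQ: "sets Q = sets P"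
  shows "sets (nuM P Q) = sets P" "space (nuM P Q) = space P"
    "\<And>A. A \<in> sets P \<Longrightarrow> emeasure (nuM P Q) A = emeasure P A + emeasure Q A"
    "finite_measure (nuM P Q)"
proof -
  show s: "sets (nuM P Q) = sets P" unfolding nuM_def
    by (simp add: sets.space_closed)
  show sp: "space (nuM P Q) = space P" unfolding nuM_def
    by (simp add: sets.space_closed)
  have ca: "countably_additive (sets P) (\<lambda>A. emeasure P A + emeasure Q A)"
  proof (rule countably_additiveI)
    fix A :: "nat \<Rightarrow> 'a set"
    assume A: "range A \<subseteq> sets P" "disjoint_family A" "\<Union> (range A) \<in> sets P"
    have "(\<Sum>i. emeasure P (A i) + emeasure Q (A i)) = (\<Sum>i. emeasure P (A i)) + (\<Sum>i. emeasure Q (A i))"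
      by (rule suminf_add[symmetric]) auto
    also have "(\<Sum>i. emeasure P (A i)) = emeasure P (\<Union> (range A))"
      using A by (intro suminf_emeasure) auto
    also have "(\<Sum>i. emeasure Q (A i)) = emeasure Q (\<Union> (range A))"
      using A sQ by (intro suminf_emeasure) auto
    finally show "(\<Sum>i. emeasure P (A i) + emeasure Q (A i)) = emeasure P (\<Union> (range A)) + emeasure Q (\<Union> (range A))" .
  qed
  have pos: "positive (sets P) (\<lambda>A. emeasure P A + emeasure Q A)"
    unfolding positive_def by simp
  show em: "\<And>A. A \<in> sets P \<Longrightarrow> emeasure (nuM P Q) A = emeasure P A + emeasure Q A"
    unfolding nuM_def by (rule emeasure_measure_of_sigma[OF sets.sigma_algebra_axioms pos ca])
  show "finite_measure (nuM P Q)"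
  proof (rule finite_measureI)
    have "emeasure (nuM P Q) (space (nuM P Q)) = emeasure P (space P) + emeasure Q (space P)"
      using em[of "space P"] sp by simp
    also have "\<dots> \<noteq> \<infinity>"
    proof -
      have "space Q = space P" using sQ by (rule sets_eq_imp_space_eq)
      then have "emeasure Q (space P) \<noteq> \<infinity>" using finite_measure.emeasure_finite[OF Q, of "space Q"] by simp
      moreover have "emeasure P (space P) \<noteq> \<infinity>" using finite_measure.emeasure_finite[OF P, of "space P"] by simp
      ultimately show ?thesis by (simp add: ennreal_add_eq_top)
    qed
    finally show "emeasure (nuM P Q) (space (nuM P Q)) \<noteq> \<infinity>" .
  qed
qed

lemma nu_ac:
  assumes P: "finite_measure P" and Q: "finite_measure Q" and sQ: "sets Q = sets P"
  shows "absolutely_continuous (nuM P Q) P" "absolutely_continuous (nuM P Q) Q"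
  unfolding absolutely_continuous_def
  using nu_basic[OF assms] sQ by (auto simp: null_sets_def)

lemma RN_facts:
  fixes N :: "'a measure"
  assumes nu: "finite_measure \<nu>" and N: "finite_measure N" and sN: "sets N = sets \<nu>"
    and ac: "absolutely_continuous \<nu> N"
  defines "p \<equiv> \<lambda>x. enn2real (RN_deriv \<nu> N x)"
  shows "p \<in> borel_measurable \<nu>" "\<And>x. 0 \<le> p x" "AE x in \<nu>. RN_deriv \<nu> N x = ennreal (p x)"
    "\<And>A. A \<in> sets \<nu> \<Longrightarrow> (\<integral>\<^sup>+x. ennreal (p x) * indicator A x \<partial>\<nu>) = emeasure N A"
    "integrable \<nu> p"
    "\<And>A. A \<in> sets \<nu> \<Longrightarrow> (\<integral>x. indicator A x * p x \<partial>\<nu>) = measure N A"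
proof -
  interpret nu: finite_measure \<nu> by fact
  interpret N: finite_measure N by fact
  show pm: "p \<in> borel_measurable \<nu>" unfolding p_def by measurable
  show "\<And>x. 0 \<le> p x" unfolding p_def by simp
  have fin: "AE x in \<nu>. RN_deriv \<nu> N x \<noteq> \<infinity>"
    by (rule nu.RN_deriv_finite[OF _ ac sN]) (simp add: N.sigma_finite_measure_axioms)
  show ae: "AE x in \<nu>. RN_deriv \<nu> N x = ennreal (p x)"
    using fin unfolding p_def by (auto elim!: AE_mp intro!: AE_I2 simp: ennreal_enn2real_if)
  have dens: "density \<nu> (RN_deriv \<nu> N) = N"
    by (rule nu.density_RN_deriv[OF ac sN])
  show int: "(\<integral>\<^sup>+x. ennreal (p x) * indicator A x \<partial>\<nu>) = emeasure N A" if A: "A \<in> sets \<nu>" for A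
  proof -
    have "emeasure N A = emeasure (density \<nu> (RN_deriv \<nu> N)) A" using dens by simp
    also have "\<dots> = (\<integral>\<^sup>+x. RN_deriv \<nu> N x * indicator A x \<partial>\<nu>)"
      using A by (simp add: emeasure_density)
    also have "\<dots> = (\<integral>\<^sup>+x. ennreal (p x) * indicator A x \<partial>\<nu>)"
      using ae by (intro nn_integral_cong_AE) (auto elim!: AE_mp)
    finally show ?thesis by simp
  qed
  show integ: "integrable \<nu> p"
  proof (rule integrableI_nonneg)
    show "AE x in \<nu>. 0 \<le> p x" unfolding p_def by simp
    have "(\<integral>\<^sup>+x. ennreal (p x) \<partial>\<nu>) = (\<integral>\<^sup>+x. ennreal (p x) * indicator (space \<nu>) x \<partial>\<nu>)"
      by (intro nn_integral_cong) auto
    also have "\<dots> = emeasure N (space \<nu>)" by (rule int) simp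
    finally show "(\<integral>\<^sup>+x. ennreal (p x) \<partial>\<nu>) < \<infinity>" using N.emeasure_finite[of "space \<nu>"]
      by (simp add: less_top[symmetric])
  qed (fact pm)
  show "(\<integral>x. indicator A x * p x \<partial>\<nu>) = measure N A" if A: "A \<in> sets \<nu>" for A
  proof -
    have "integrable \<nu> (\<lambda>x. indicator A x * p x)"
      using integrable_mult_indicator[OF A integ] by simp
    then have "(\<integral>x. indicator A x * p x \<partial>\<nu>) = enn2real (\<integral>\<^sup>+x. ennreal (indicator A x * p x) \<partial>\<nu>)"
      by (subst integral_eq_nn_integral) (auto simp: p_def)
    also have "(\<integral>\<^sup>+x. ennreal (indicator A x * p x) \<partial>\<nu>) = (\<integral>\<^sup>+x. ennreal (p x) * indicator A x \<partial>\<nu>)"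
      by (intro nn_integral_cong) (auto simp: indicator_def)
    also have "\<dots> = emeasure N A" by (rule int[OF A])
    finally show ?thesis by (simp add: measure_def)
  qed
qed

lemma setwise_le_AE:
  fixes u v :: "'a \<Rightarrow> real" and M :: "'a measure"
  assumes u: "integrable M u" and v: "integrable M v"
    and le: "\<And>A. A \<in> sets M \<Longrightarrow> (\<integral>x. indicator A x * u x \<partial>M) \<le> (\<integral>x. indicator A x * v x \<partial>M)"
  shows "AE x in M. u x \<le> v x"
proof -
  define A where "A = {x \<in> space M. v x < u x}"
  have um[measurable]: "u \<in> borel_measurable M" using u by auto
  have vm[measurable]: "v \<in> borel_measurable M" using v by auto
  have A[measurable]: "A \<in> sets M" unfolding A_def by measurable
  define w where "w = (\<lambda>x. indicator A x * (u x - v x))"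
  have iu: "integrable M (\<lambda>x. indicator A x * u x)" using integrable_mult_indicator[OF A u] by simp
  have iv: "integrable M (\<lambda>x. indicator A x * v x)" using integrable_mult_indicator[OF A v] by simp
  have w_eq: "w = (\<lambda>x. indicator A x * u x - indicator A x * v x)"
    unfolding w_def by (auto simp: algebra_simps)
  have iw: "integrable M w" unfolding w_eq using iu iv by auto
  have w0: "\<And>x. 0 \<le> w x" unfolding w_def A_def by (auto simp: indicator_def)
  have "integral\<^sup>L M w = (\<integral>x. indicator A x * u x \<partial>M) - (\<integral>x. indicator A x * v x \<partial>M)"
    unfolding w_eq using iu iv by (rule Bochner_Integration.integral_diff)
  also have "\<dots> \<le> 0" using le[OF A] by simp
  finally have "integral\<^sup>L M w = 0" using integral_nonneg_AE[of w M] w0 by fastforce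
  then have "AE x in M. w x = 0" using integral_nonneg_eq_0_iff_AE[OF iw] w0 by auto
  then show ?thesis using AE_space
    by eventually_elim (auto simp: w_def A_def indicator_def split: if_splits)
qed

definition Eint :: "'a measure \<Rightarrow> ('a \<Rightarrow> ereal) \<Rightarrow> ereal" where
  "Eint M g = enn2ereal (\<integral>\<^sup>+ x. e2ennreal (max 0 (g x)) \<partial>M) - enn2ereal (\<integral>\<^sup>+ x. e2ennreal (max 0 (- g x)) \<partial>M)"

lemma e2_pos: "e2ennreal (max 0 (ereal r)) = ennreal r"
  by (cases "r \<le> 0") (auto simp: max_def e2ennreal_ereal ennreal_neg zero_ereal_def)

lemma e2_neg: "e2ennreal (max 0 (- ereal r)) = ennreal (- r)"
  using e2_pos[of "-r"] by simp

lemma enn2ereal_fin: "a \<noteq> \<top> \<Longrightarrow> enn2ereal a = ereal (enn2real a)"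
  by (cases a rule: ennreal_cases) (auto simp: enn2ereal_ennreal)

lemma Eint_real:
  assumes h: "integrable M h"
  shows "Eint M (\<lambda>x. ereal (h x)) = ereal (integral\<^sup>L M h)"
proof -
  have f1: "(\<integral>\<^sup>+ x. ennreal (h x) \<partial>M) \<noteq> \<top>" using integrableD(2)[OF h] by simp
  have f2: "(\<integral>\<^sup>+ x. ennreal (- h x) \<partial>M) \<noteq> \<top>" using integrableD(3)[OF h] by simp
  show ?thesis
    unfolding Eint_def e2_pos e2_neg real_lebesgue_integral_def[OF h]
    using f1 f2 by (simp add: enn2ereal_fin)
qed

lemma neg_mono1: "ereal a \<le> (g::ereal) \<Longrightarrow> - g \<le> ereal (- a)"
  by (metis ereal_minus_le_minus uminus_ereal.simps(1))

lemma neg_mono2: "(g::ereal) \<le> ereal a \<Longrightarrow> ereal (- a) \<le> - g"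
  by (metis ereal_minus_le_minus uminus_ereal.simps(1))

lemma Eint_ge:
  assumes h: "integrable M h" and le: "AE x in M. ereal (h x) \<le> g x"
  shows "ereal (integral\<^sup>L M h) \<le> Eint M g"
proof -
  have "Eint M (\<lambda>x. ereal (h x)) \<le> Eint M g"
    unfolding Eint_def
  proof (rule ereal_minus_mono)
    show "enn2ereal (\<integral>\<^sup>+ x. e2ennreal (max 0 (ereal (h x))) \<partial>M) \<le> enn2ereal (\<integral>\<^sup>+ x. e2ennreal (max 0 (g x)) \<partial>M)"
      unfolding less_eq_ennreal.rep_eq[symmetric]
      using le by (intro nn_integral_mono_AE, elim AE_mp) (auto intro!: AE_I2 e2ennreal_mono max.mono neg_mono1 neg_mono2)
    show "enn2ereal (\<integral>\<^sup>+ x. e2ennreal (max 0 (- g x)) \<partial>M) \<le> enn2ereal (\<integral>\<^sup>+ x. e2ennreal (max 0 (- ereal (h x))) \<partial>M)"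
      unfolding less_eq_ennreal.rep_eq[symmetric]
      using le by (intro nn_integral_mono_AE, elim AE_mp) (auto intro!: AE_I2 e2ennreal_mono max.mono neg_mono1 neg_mono2)
  qed
  then show ?thesis using Eint_real[OF h] by simp
qed

lemma Eint_le:
  assumes h: "integrable M h" and le: "AE x in M. g x \<le> ereal (h x)"
  shows "Eint M g \<le> ereal (integral\<^sup>L M h)"
proof -
  have "Eint M g \<le> Eint M (\<lambda>x. ereal (h x))"
    unfolding Eint_def
  proof (rule ereal_minus_mono)
    show "enn2ereal (\<integral>\<^sup>+ x. e2ennreal (max 0 (g x)) \<partial>M) \<le> enn2ereal (\<integral>\<^sup>+ x. e2ennreal (max 0 (ereal (h x))) \<partial>M)"
      unfolding less_eq_ennreal.rep_eq[symmetric]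
      using le by (intro nn_integral_mono_AE, elim AE_mp) (auto intro!: AE_I2 e2ennreal_mono max.mono neg_mono1 neg_mono2)
    show "enn2ereal (\<integral>\<^sup>+ x. e2ennreal (max 0 (- ereal (h x))) \<partial>M) \<le> enn2ereal (\<integral>\<^sup>+ x. e2ennreal (max 0 (- g x)) \<partial>M)"
      unfolding less_eq_ennreal.rep_eq[symmetric]
      using le by (intro nn_integral_mono_AE, elim AE_mp) (auto intro!: AE_I2 e2ennreal_mono max.mono neg_mono1 neg_mono2)
  qed
  then show ?thesis using Eint_real[OF h] by simp
qed

lemma fdiv_alt: "fdiv f P Q = Eint (nuM P Q)
   (\<lambda>x. fdiv_pt f (enn2real (RN_deriv (nuM P Q) P x)) (enn2real (RN_deriv (nuM P Q) Q x)))"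
  unfolding fdiv_def Let_def Eint_def nuM_def by simp

lemma pt_lower:
  assumes f: "convex_on {0<..} f" and line: "\<And>t. t > 0 \<Longrightarrow> s * t + b \<le> f t"
    and p: "0 \<le> p" and q: "0 \<le> q"
  shows "ereal (s * p + b * q) \<le> fdiv_pt f p q"
proof (cases "q > 0")
  case qpos: True
  show ?thesis
  proof (cases "p > 0")
    case True
    have "q * (s * (p / q) + b) \<le> q * f (p / q)"
      using line[of "p / q"] True qpos by (intro mult_left_mono) auto
    moreover have "q * (s * (p / q) + b) = s * p + b * q" using qpos by (simp add: field_simps)
    ultimately have "s * p + b * q \<le> q * f (p / q)" by linarith
    then show ?thesis using True qpos by (simp add: fdiv_pt_def)
  next
    case False
    then have p0: "p = 0" using p by auto
    have "ereal b \<le> f_at0 f" by (rule f_at0_ge[OF f line])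
    then have "ereal q * ereal b \<le> ereal q * f_at0 f"
      using qpos by (intro ereal_mult_left_mono) auto
    then show ?thesis using p0 qpos by (simp add: fdiv_pt_def mult.commute)
  qed
next
  case False
  then have q0: "q = 0" using q by auto
  show ?thesis
  proof (cases "p > 0")
    case True
    have "ereal s \<le> f_slope f" by (rule f_slope_ge[OF f line])
    then have "ereal p * ereal s \<le> ereal p * f_slope f"
      using True by (intro ereal_mult_left_mono) auto
    then show ?thesis using True q0 by (simp add: fdiv_pt_def mult.commute)
  next
    case False
    then have "p = 0" using p by auto
    then show ?thesis using q0 by (simp add: fdiv_pt_def)
  qed
qed

lemma pt_upper:
  assumes f: "convex_on {0<..} f" and lo: "0 \<le> lo" and q: "0 < q" and "lo * q \<le> p" "p \<le> hi * q"
    and chord: "\<And>t. t > 0 \<Longrightarrow> lo \<le> t \<Longrightarrow> t \<le> hi \<Longrightarrow> f t \<le> c + m * t"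
    and at0: "lo = 0 \<Longrightarrow> f_at0 f \<le> ereal c"
  shows "fdiv_pt f p q \<le> ereal (c * q + m * p)"
proof (cases "p > 0")
  case True
  have t: "lo \<le> p / q" "p / q \<le> hi" using assms by (auto simp: field_simps)
  have "q * f (p / q) \<le> q * (c + m * (p / q))"
    using chord[of "p / q"] True q t by (intro mult_left_mono) auto
  moreover have "q * (c + m * (p / q)) = c * q + m * p" using q by (simp add: field_simps)
  ultimately have "q * f (p / q) \<le> c * q + m * p" by linarith
  then show ?thesis using True q by (simp add: fdiv_pt_def)
next
  case False
  then have p0: "p = 0" using assms lo by (smt (verit) mult_nonneg_nonneg)
  then have "lo = 0" using assms by (smt (verit) mult_pos_pos)
  then have "ereal q * f_at0 f \<le> ereal q * ereal c"
    using at0 q by (intro ereal_mult_left_mono) auto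
  then show ?thesis using p0 q by (simp add: fdiv_pt_def mult.commute)
qed

lemma fdiv_LB:
  fixes P Q :: "'a measure"
  assumes P: "prob_space P" and Q: "prob_space Q" and sQ: "sets Q = sets P" and A: "A \<in> sets P"
    and on: "\<And>p q. 0 \<le> p \<Longrightarrow> 0 \<le> q \<Longrightarrow> ereal (s2 * p + b2 * q) \<le> fdiv_pt f p q"
    and off: "AE x in nuM P Q. x \<notin> A \<longrightarrow> ereal (s1 * enn2real (RN_deriv (nuM P Q) P x) + b1 * enn2real (RN_deriv (nuM P Q) Q x))
        \<le> fdiv_pt f (enn2real (RN_deriv (nuM P Q) P x)) (enn2real (RN_deriv (nuM P Q) Q x))"
  shows "ereal (s2 * measure P A + b2 * measure Q A + s1 * (1 - measure P A) + b1 * (1 - measure Q A)) \<le> fdiv f P Q"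
proof -
  interpret P: prob_space P by fact
  interpret Q: prob_space Q by fact
  define \<nu> where "\<nu> = nuM P Q"
  define p where "p = (\<lambda>x. enn2real (RN_deriv \<nu> P x))"
  define q where "q = (\<lambda>x. enn2real (RN_deriv \<nu> Q x))"
  have nb: "sets \<nu> = sets P" "space \<nu> = space P" "finite_measure \<nu>"
    using nu_basic[OF P.finite_measure_axioms Q.finite_measure_axioms sQ] unfolding \<nu>_def by auto
  have ac: "absolutely_continuous \<nu> P" "absolutely_continuous \<nu> Q"
    using nu_ac[OF P.finite_measure_axioms Q.finite_measure_axioms sQ] unfolding \<nu>_def by auto
  note RP = RN_facts[OF nb(3) P.finite_measure_axioms nb(1)[symmetric] ac(1), folded p_def]
  note RQ = RN_facts[OF nb(3) Q.finite_measure_axioms _ ac(2), folded q_def]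
  have sQn: "sets Q = sets \<nu>" using sQ nb by simp
  define B where "B = space \<nu> - A"
  have A': "A \<in> sets \<nu>" using A nb by simp
  have B: "B \<in> sets \<nu>" unfolding B_def using A' by auto
  define h where "h = (\<lambda>x. s2 * (indicator A x * p x) + b2 * (indicator A x * q x)
      + s1 * (indicator B x * p x) + b1 * (indicator B x * q x))"
  have iAp: "integrable \<nu> (\<lambda>x. indicator A x * p x)" using integrable_mult_indicator[OF A' RP(5)] by simp
  have iAq: "integrable \<nu> (\<lambda>x. indicator A x * q x)" using integrable_mult_indicator[OF A' RQ(5)[OF sQn]] by simp
  have iBp: "integrable \<nu> (\<lambda>x. indicator B x * p x)" using integrable_mult_indicator[OF B RP(5)] by simp
  have iBq: "integrable \<nu> (\<lambda>x. indicator B x * q x)" using integrable_mult_indicator[OF B RQ(5)[OF sQn]] by simp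
  have ih: "integrable \<nu> h" unfolding h_def using iAp iAq iBp iBq by auto
  have "integral\<^sup>L \<nu> h = s2 * measure P A + b2 * measure Q A + s1 * measure P B + b1 * measure Q B"
    unfolding h_def using iAp iAq iBp iBq RP(6)[OF A'] RQ(6)[OF sQn A'] RP(6)[OF B] RQ(6)[OF sQn B]
    by (simp add: Bochner_Integration.integral_add p_def q_def)
  also have "measure P B = 1 - measure P A" unfolding B_def nb using A by (rule P.prob_compl)
  also have "measure Q B = 1 - measure Q A" unfolding B_def nb using A sQ
    by (metis Q.prob_compl sets_eq_imp_space_eq)
  finally have hint: "integral\<^sup>L \<nu> h = s2 * measure P A + b2 * measure Q A + s1 * (1 - measure P A) + b1 * (1 - measure Q A)" .
  have "AE x in \<nu>. ereal (h x) \<le> fdiv_pt f (p x) (q x)"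
    using off[folded \<nu>_def, folded p_def q_def] AE_space
  proof eventually_elim
    case (elim x)
    show ?case
    proof (cases "x \<in> A")
      case True
      then have "h x = s2 * p x + b2 * q x" unfolding h_def B_def by auto
      moreover have "0 \<le> p x" "0 \<le> q x" by (auto simp: p_def q_def)
      ultimately show ?thesis using on[of "p x" "q x"] by auto
    next
      case False
      then have "h x = s1 * p x + b1 * q x" unfolding h_def B_def using elim by auto
      then show ?thesis using elim False by (auto simp: p_def q_def)
    qed
  qed
  then have "ereal (integral\<^sup>L \<nu> h) \<le> Eint \<nu> (\<lambda>x. fdiv_pt f (p x) (q x))"
    by (rule Eint_ge[OF ih])
  then show ?thesis unfolding fdiv_alt hint[symmetric] \<nu>_def p_def q_def .
qed

lemma fdiv_UB:
  fixes P Q :: "'a measure"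
  assumes P: "prob_space P" and Q: "prob_space Q" and sQ: "sets Q = sets P"
    and f: "convex_on {0<..} f" and lo: "0 \<le> lo" and hi: "0 < hi"
    and setlo: "\<And>A. A \<in> sets P \<Longrightarrow> lo * measure Q A \<le> measure P A"
    and sethi: "\<And>A. A \<in> sets P \<Longrightarrow> measure P A \<le> hi * measure Q A"
    and chord: "\<And>t. t > 0 \<Longrightarrow> lo \<le> t \<Longrightarrow> t \<le> hi \<Longrightarrow> f t \<le> c + m * t"
    and at0: "lo = 0 \<Longrightarrow> f_at0 f \<le> ereal c"
  shows "fdiv f P Q \<le> ereal (c + m)"
proof -
  interpret P: prob_space P by fact
  interpret Q: prob_space Q by fact
  define \<nu> where "\<nu> = nuM P Q"
  define p where "p = (\<lambda>x. enn2real (RN_deriv \<nu> P x))"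
  define q where "q = (\<lambda>x. enn2real (RN_deriv \<nu> Q x))"
  have nb: "sets \<nu> = sets P" "space \<nu> = space P" "finite_measure \<nu>"
    "\<And>A. A \<in> sets P \<Longrightarrow> emeasure \<nu> A = emeasure P A + emeasure Q A"
    using nu_basic[OF P.finite_measure_axioms Q.finite_measure_axioms sQ] unfolding \<nu>_def by auto
  have ac: "absolutely_continuous \<nu> P" "absolutely_continuous \<nu> Q"
    using nu_ac[OF P.finite_measure_axioms Q.finite_measure_axioms sQ] unfolding \<nu>_def by auto
  have sQn: "sets Q = sets \<nu>" using sQ nb by simp
  note RP = RN_facts[OF nb(3) P.finite_measure_axioms nb(1)[symmetric] ac(1)]
  note RQ = RN_facts[OF nb(3) Q.finite_measure_axioms sQn ac(2)]
  have pm[measurable]: "p \<in> borel_measurable \<nu>" using RP(1) unfolding p_def .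
  have qm[measurable]: "q \<in> borel_measurable \<nu>" using RQ(1) unfolding q_def .
  have ip: "integrable \<nu> p" using RP(5) unfolding p_def .
  have iq: "integrable \<nu> q" using RQ(5) unfolding q_def .
  have p0: "\<And>x. 0 \<le> p x" and q0: "\<And>x. 0 \<le> q x" unfolding p_def q_def by auto
  have IP: "\<And>A. A \<in> sets \<nu> \<Longrightarrow> (\<integral>x. indicator A x * p x \<partial>\<nu>) = measure P A" using RP(6) unfolding p_def .
  have IQ: "\<And>A. A \<in> sets \<nu> \<Longrightarrow> (\<integral>x. indicator A x * q x \<partial>\<nu>) = measure Q A" using RQ(6) unfolding q_def .
  have ae1: "AE x in \<nu>. p x \<le> hi * q x"
  proof (rule setwise_le_AE[OF ip])
    show "integrable \<nu> (\<lambda>x. hi * q x)" using iq by auto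
    fix A assume A: "A \<in> sets \<nu>"
    have "(\<integral>x. indicator A x * (hi * q x) \<partial>\<nu>) = hi * (\<integral>x. indicator A x * q x \<partial>\<nu>)"
      by (simp add: mult.left_commute)
    then show "(\<integral>x. indicator A x * p x \<partial>\<nu>) \<le> (\<integral>x. indicator A x * (hi * q x) \<partial>\<nu>)"
      using IP[OF A] IQ[OF A] sethi[of A] A nb by auto
  qed
  have ae2: "AE x in \<nu>. lo * q x \<le> p x"
  proof (rule setwise_le_AE[OF _ ip])
    show "integrable \<nu> (\<lambda>x. lo * q x)" using iq by auto
    fix A assume A: "A \<in> sets \<nu>"
    have "(\<integral>x. indicator A x * (lo * q x) \<partial>\<nu>) = lo * (\<integral>x. indicator A x * q x \<partial>\<nu>)"
      by (simp add: mult.left_commute)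
    then show "(\<integral>x. indicator A x * (lo * q x) \<partial>\<nu>) \<le> (\<integral>x. indicator A x * p x \<partial>\<nu>)"
      using IP[OF A] IQ[OF A] setlo[of A] A nb by auto
  qed
  define Z where "Z = {x \<in> space \<nu>. q x = 0}"
  have Z: "Z \<in> sets \<nu>" unfolding Z_def by measurable
  have "(\<integral>x. indicator Z x * q x \<partial>\<nu>) = 0"
    by (rule integral_eq_zero_AE) (auto simp: Z_def indicator_def)
  then have QZ: "measure Q Z = 0" using IQ[OF Z] by simp
  then have PZ: "measure P Z = 0" using sethi[of Z] Z nb by (simp add: measure_nonneg antisym)
  have "emeasure \<nu> Z = 0"
    using nb(4)[of Z] Z nb QZ PZ P.emeasure_eq_measure Q.emeasure_eq_measure sQ by simp
  then have "Z \<in> null_sets \<nu>" using Z by auto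
  then have ae3: "AE x in \<nu>. x \<notin> Z" by (rule AE_not_in)
  have "AE x in \<nu>. fdiv_pt f (p x) (q x) \<le> ereal (c * q x + m * p x)"
    using ae1 ae2 ae3 AE_space
  proof eventually_elim
    case (elim x)
    then have "0 < q x" using q0[of x] unfolding Z_def by (auto simp: less_le)
    then show ?case using pt_upper[OF f lo _ elim(2) elim(1) chord at0] by auto
  qed
  moreover have ih: "integrable \<nu> (\<lambda>x. c * q x + m * p x)" using ip iq by auto
  ultimately have "Eint \<nu> (\<lambda>x. fdiv_pt f (p x) (q x)) \<le> ereal (integral\<^sup>L \<nu> (\<lambda>x. c * q x + m * p x))"
    by (intro Eint_le) auto
  also have "integral\<^sup>L \<nu> (\<lambda>x. c * q x + m * p x) = c * integral\<^sup>L \<nu> q + m * integral\<^sup>L \<nu> p"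
    using ip iq by simp
  also have "integral\<^sup>L \<nu> q = measure Q (space \<nu>)"
    using IQ[of "space \<nu>"] by (simp cong: Bochner_Integration.integral_cong add: indicator_def)
  also have "integral\<^sup>L \<nu> p = measure P (space \<nu>)"
    using IP[of "space \<nu>"] by (simp cong: Bochner_Integration.integral_cong add: indicator_def)
  also have "measure Q (space \<nu>) = 1" using nb sQ by (metis Q.prob_space sets_eq_imp_space_eq)
  also have "measure P (space \<nu>) = 1" using nb by (simp add: P.prob_space)
  finally show ?thesis unfolding fdiv_alt \<nu>_def p_def q_def by simp
qed

lemma fdiv_nonneg:
  fixes P Q :: "'a measure"
  assumes P: "prob_space P" and Q: "prob_space Q" and sQ: "sets Q = sets P"
    and f: "convex_on {0<..} f" and f1: "f 1 = 0"
  shows "0 \<le> fdiv f P Q"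
proof -
  obtain s sr where "s \<le> sr" and L: "\<forall>s' t. s \<le> s' \<and> s' \<le> sr \<and> 0 < t \<longrightarrow> f 1 + s' * (t - 1) \<le> f t"
    using subgrad[OF f, of 1] by auto
  have line: "\<And>t. 0 < t \<Longrightarrow> f 1 + s * (t - 1) \<le> f t" using L \<open>s \<le> sr\<close> by auto
  have line': "\<And>t. 0 < t \<Longrightarrow> s * t + (- s) \<le> f t" using line f1 by (auto simp: algebra_simps)
  have "ereal (s * measure P (space P) + (- s) * measure Q (space P) + s * (1 - measure P (space P)) + (- s) * (1 - measure Q (space P))) \<le> fdiv f P Q"
    by (rule fdiv_LB[OF P Q sQ sets.top], rule pt_lower[OF f line'], assumption+,
        rule AE_I2, intro impI, rule pt_lower[OF f line'], simp_all)
  then show ?thesis by (simp add: algebra_simps zero_ereal_def)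
qed

lemma Pt_bounds:
  fixes \<mu> :: "'a measure"
  assumes mu: "prob_space \<mu>" and PP: "P \<in> Ptilde c1 c2 \<mu>" and c1: "0 \<le> c1" and c12: "c1 \<le> c2" and A: "A \<in> sets \<mu>"
  shows "c1 * measure \<mu> A \<le> measure P A" "measure P A \<le> c2 * measure \<mu> A"
proof -
  interpret mu: prob_space \<mu> by fact
  have P: "prob_space P" "sets P = sets \<mu>" "absolutely_continuous \<mu> P"
    and ae: "AE x in \<mu>. ennreal c1 \<le> RN_deriv \<mu> P x \<and> RN_deriv \<mu> P x \<le> ennreal c2"
    using PP unfolding Ptilde_def by auto
  interpret Pp: prob_space P by fact
  have dens: "density \<mu> (RN_deriv \<mu> P) = P"
    by (rule mu.density_RN_deriv[OF P(3) P(2)])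
  have eP: "emeasure P A = (\<integral>\<^sup>+x. RN_deriv \<mu> P x * indicator A x \<partial>\<mu>)"
    using A by (subst dens[symmetric]) (simp add: emeasure_density)
  have "AE x in \<mu>. ennreal c1 * indicator A x \<le> RN_deriv \<mu> P x * indicator A x"
    using ae by eventually_elim (auto intro: mult_right_mono)
  then have "(\<integral>\<^sup>+x. ennreal c1 * indicator A x \<partial>\<mu>) \<le> (\<integral>\<^sup>+x. RN_deriv \<mu> P x * indicator A x \<partial>\<mu>)"
    by (rule nn_integral_mono_AE)
  then have "ennreal c1 * emeasure \<mu> A \<le> emeasure P A"
    using A eP by (simp add: nn_integral_cmult_indicator)
  then have "ennreal (c1 * measure \<mu> A) \<le> ennreal (measure P A)"
    using A P(2) by (simp add: mu.emeasure_eq_measure Pp.emeasure_eq_measure ennreal_mult c1)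
  then show "c1 * measure \<mu> A \<le> measure P A" by (simp add: ennreal_le_iff)
  have "AE x in \<mu>. RN_deriv \<mu> P x * indicator A x \<le> ennreal c2 * indicator A x"
    using ae by eventually_elim (auto intro: mult_right_mono)
  then have "(\<integral>\<^sup>+x. RN_deriv \<mu> P x * indicator A x \<partial>\<mu>) \<le> (\<integral>\<^sup>+x. ennreal c2 * indicator A x \<partial>\<mu>)"
    by (rule nn_integral_mono_AE)
  then have "emeasure P A \<le> ennreal c2 * emeasure \<mu> A"
    using A eP by (simp add: nn_integral_cmult_indicator)
  moreover have "0 \<le> c2" using c1 c12 by simp
  ultimately have "ennreal (measure P A) \<le> ennreal (c2 * measure \<mu> A)"
    using A P(2) by (simp add: mu.emeasure_eq_measure Pp.emeasure_eq_measure ennreal_mult)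
  then show "measure P A \<le> c2 * measure \<mu> A"
    using \<open>0 \<le> c2\<close> by (simp add: ennreal_le_iff)
qed

lemma mix_basic:
  fixes P \<mu> :: "'a measure"
  assumes P: "prob_space P" and mu: "prob_space \<mu>" and sP: "sets P = sets \<mu>"
    and l0: "0 \<le> lam" and l1: "lam \<le> 1"
  shows "sets (mixture lam P \<mu>) = sets \<mu>"
    "\<And>A. A \<in> sets \<mu> \<Longrightarrow> measure (mixture lam P \<mu>) A = lam * measure P A + (1 - lam) * measure \<mu> A"
    "prob_space (mixture lam P \<mu>)"
proof -
  interpret P: prob_space P by fact
  interpret mu: prob_space \<mu> by fact
  show s: "sets (mixture lam P \<mu>) = sets \<mu>" unfolding mixture_def
    by (simp add: sets.space_closed)
  have sp: "space (mixture lam P \<mu>) = space \<mu>" unfolding mixture_def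
    by (simp add: sets.space_closed)
  have ca: "countably_additive (sets \<mu>) (\<lambda>A. ennreal lam * emeasure P A + ennreal (1 - lam) * emeasure \<mu> A)"
  proof (rule countably_additiveI)
    fix A :: "nat \<Rightarrow> 'a set"
    assume A: "range A \<subseteq> sets \<mu>" "disjoint_family A" "\<Union> (range A) \<in> sets \<mu>"
    have "(\<Sum>i. ennreal lam * emeasure P (A i) + ennreal (1 - lam) * emeasure \<mu> (A i))
        = (\<Sum>i. ennreal lam * emeasure P (A i)) + (\<Sum>i. ennreal (1 - lam) * emeasure \<mu> (A i))"
      by (rule suminf_add[symmetric]) auto
    also have "(\<Sum>i. ennreal lam * emeasure P (A i)) = ennreal lam * (\<Sum>i. emeasure P (A i))"
      by (rule ennreal_suminf_cmult)
    also have "(\<Sum>i. emeasure P (A i)) = emeasure P (\<Union> (range A))"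
      using A sP by (intro suminf_emeasure) auto
    also have "(\<Sum>i. ennreal (1 - lam) * emeasure \<mu> (A i)) = ennreal (1 - lam) * (\<Sum>i. emeasure \<mu> (A i))"
      by (rule ennreal_suminf_cmult)
    also have "(\<Sum>i. emeasure \<mu> (A i)) = emeasure \<mu> (\<Union> (range A))"
      using A by (intro suminf_emeasure) auto
    finally show "(\<Sum>i. ennreal lam * emeasure P (A i) + ennreal (1 - lam) * emeasure \<mu> (A i))
        = ennreal lam * emeasure P (\<Union> (range A)) + ennreal (1 - lam) * emeasure \<mu> (\<Union> (range A))" .
  qed
  have pos: "positive (sets \<mu>) (\<lambda>A. ennreal lam * emeasure P A + ennreal (1 - lam) * emeasure \<mu> A)"
    unfolding positive_def by simp
  have em: "emeasure (mixture lam P \<mu>) A = ennreal (lam * measure P A + (1 - lam) * measure \<mu> A)"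
    if A: "A \<in> sets \<mu>" for A
  proof -
    have "emeasure (mixture lam P \<mu>) A = ennreal lam * emeasure P A + ennreal (1 - lam) * emeasure \<mu> A"
      unfolding mixture_def by (rule emeasure_measure_of_sigma[OF sets.sigma_algebra_axioms pos ca A])
    also have "\<dots> = ennreal (lam * measure P A + (1 - lam) * measure \<mu> A)"
      using l0 l1 A sP by (simp add: P.emeasure_eq_measure mu.emeasure_eq_measure ennreal_mult ennreal_plus)
    finally show ?thesis .
  qed
  show "measure (mixture lam P \<mu>) A = lam * measure P A + (1 - lam) * measure \<mu> A" if A: "A \<in> sets \<mu>" for A
    unfolding measure_def em[OF A]
    by (rule enn2real_ennreal) (use l0 l1 in \<open>auto intro!: add_nonneg_nonneg mult_nonneg_nonneg\<close>)
  show "prob_space (mixture lam P \<mu>)"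
  proof (rule prob_spaceI)
    have "emeasure (mixture lam P \<mu>) (space (mixture lam P \<mu>)) = ennreal (lam * measure P (space \<mu>) + (1 - lam) * measure \<mu> (space \<mu>))"
      unfolding sp by (rule em) simp
    also have "measure P (space \<mu>) = 1" using sP by (metis P.prob_space sets_eq_imp_space_eq)
    also have "measure \<mu> (space \<mu>) = 1" by (rule mu.prob_space)
    finally show "emeasure (mixture lam P \<mu>) (space (mixture lam P \<mu>)) = 1" by simp
  qed
qed

lemma dens_in_Pt:
  fixes \<mu> :: "'a measure"
  assumes mu: "prob_space \<mu>" and A: "A \<in> sets \<mu>" and c1: "0 \<le> c1" and c12: "c1 \<le> c2"
    and tot: "c2 * measure \<mu> A + c1 * (1 - measure \<mu> A) = 1"
  defines "P \<equiv> density \<mu> (\<lambda>x. ennreal (if x \<in> A then c2 else c1))"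
  shows "P \<in> Ptilde c1 c2 \<mu>" "measure P A = c2 * measure \<mu> A" "prob_space P" "sets P = sets \<mu>"
proof -
  interpret mu: prob_space \<mu> by fact
  define g where "g = (\<lambda>x. ennreal (if x \<in> A then c2 else c1))"
  have gm[measurable]: "g \<in> borel_measurable \<mu>"
  proof -
    have "(\<lambda>x. if x \<in> A then ennreal c2 else ennreal c1) \<in> borel_measurable \<mu>"
      by (rule measurable_If_set) (auto simp: A)
    moreover have "g = (\<lambda>x. if x \<in> A then ennreal c2 else ennreal c1)" unfolding g_def by auto
    ultimately show ?thesis by simp
  qed
  have c2: "0 \<le> c2" using c1 c12 by simp
  show sP: "sets P = sets \<mu>" unfolding P_def by simp
  have spP: "space P = space \<mu>" unfolding P_def by simp
  have "emeasure P A = (\<integral>\<^sup>+x. g x * indicator A x \<partial>\<mu>)"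
    unfolding P_def g_def[symmetric] using A by (simp add: emeasure_density)
  also have "\<dots> = (\<integral>\<^sup>+x. ennreal c2 * indicator A x \<partial>\<mu>)"
    by (intro nn_integral_cong) (auto simp: g_def indicator_def)
  also have "\<dots> = ennreal c2 * emeasure \<mu> A" using A by (simp add: nn_integral_cmult_indicator)
  finally have eA: "emeasure P A = ennreal (c2 * measure \<mu> A)"
    by (simp add: mu.emeasure_eq_measure ennreal_mult c2)
  have B: "space \<mu> - A \<in> sets \<mu>" using A by auto
  have "emeasure P (space P) = (\<integral>\<^sup>+x. g x * indicator (space \<mu>) x \<partial>\<mu>)"
    unfolding P_def g_def[symmetric] by (simp add: emeasure_density)
  also have "\<dots> = (\<integral>\<^sup>+x. ennreal c2 * indicator A x + ennreal c1 * indicator (space \<mu> - A) x \<partial>\<mu>)"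
    using sets.sets_into_space[OF A]
    by (intro nn_integral_cong) (auto simp: g_def indicator_def)
  also have "\<dots> = ennreal c2 * emeasure \<mu> A + ennreal c1 * emeasure \<mu> (space \<mu> - A)"
    using A B by (simp add: nn_integral_add nn_integral_cmult_indicator)
  also have "\<dots> = ennreal (c2 * measure \<mu> A + c1 * (1 - measure \<mu> A))"
    using A c1 c2 by (simp add: mu.emeasure_eq_measure mu.prob_compl ennreal_mult ennreal_plus)
  also have "\<dots> = 1" using tot by simp
  finally have "emeasure P (space P) = 1" .
  then show prob: "prob_space P" by (rule prob_spaceI)
  then show "measure P A = c2 * measure \<mu> A"
    using eA c2 by (simp add: measure_def)
  have ac: "absolutely_continuous \<mu> P" unfolding P_def g_def[symmetric] by (rule absolutely_continuousI_density[OF gm])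
  have "AE x in \<mu>. g x = RN_deriv \<mu> P x"
    unfolding P_def g_def[symmetric] by (rule mu.RN_deriv_unique[OF gm refl])
  then have "AE x in \<mu>. ennreal c1 \<le> RN_deriv \<mu> P x \<and> RN_deriv \<mu> P x \<le> ennreal c2"
  proof eventually_elim
    case (elim x)
    then show ?case using c12 c2 unfolding g_def by (cases "x \<in> A") (metis ennreal_leI order_refl)+
  qed
  then show "P \<in> Ptilde c1 c2 \<mu>" unfolding Ptilde_def using prob sP ac by auto
qed

lemma LDP_ineq:
  fixes c1 c2 E lam m x y :: real
  assumes c1: "0 \<le> c1" "c1 < 1" "1 < c2" and E: "1 \<le> E" and l: "0 \<le> lam" "lam \<le> 1"
    and m: "0 \<le> m" "m \<le> 1" and x1: "x \<le> c2 * m" and x2: "x \<le> 1 - c1 * (1 - m)" and y: "c1 * m \<le> y"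
    and d: "0 \<le> lam * ((1 - c1) * E + c2 - 1) - (E - 1)"
  shows "lam * x + (1 - lam) * m \<le> E * (lam * y + (1 - lam) * m)
     + (1 - c1) / (c2 - c1) * (lam * ((1 - c1) * E + c2 - 1) - (E - 1))"
proof -
  define al where "al = (1 - c1) / (c2 - c1)"
  define dd where "dd = lam * ((1 - c1) * E + c2 - 1) - (E - 1)"
  have al: "0 < al" "al * (c2 - c1) = 1 - c1" using c1 unfolding al_def by (auto simp: field_simps)
  have Ey: "E * (lam * y) \<ge> E * (lam * (c1 * m))"
    using y l E by (intro mult_left_mono) auto
  show ?thesis
  proof (cases "m \<le> al")
    case True
    have lx: "lam * x \<le> lam * (c2 * m)" using x1 l by (intro mult_left_mono) auto
    have "lam * x + (1 - lam) * m - E * (lam * y + (1 - lam) * m)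
        \<le> lam * (c2 * m) + (1 - lam) * m - E * (lam * (c1 * m) + (1 - lam) * m)"
      using lx Ey by (simp add: algebra_simps)
    also have "\<dots> = m * dd" unfolding dd_def by (simp add: algebra_simps)
    also have "\<dots> \<le> al * dd" using True d unfolding dd_def by (intro mult_right_mono) auto
    finally show ?thesis unfolding al_def dd_def by linarith
  next
    case False
    have lx: "lam * x \<le> lam * (1 - c1 * (1 - m))" using x2 l by (intro mult_left_mono) auto
    have "lam * x + (1 - lam) * m - E * (lam * y + (1 - lam) * m)
        \<le> lam * (1 - c1 * (1 - m)) + (1 - lam) * m - E * (lam * (c1 * m) + (1 - lam) * m)"
      using lx Ey by (simp add: algebra_simps)
    also have "\<dots> = lam * (1 - c1) - m * ((E - 1) * (1 - lam * (1 - c1)))"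
      by (simp add: algebra_simps)
    also have "\<dots> \<le> lam * (1 - c1) - al * ((E - 1) * (1 - lam * (1 - c1)))"
    proof -
      have "0 \<le> (E - 1) * (1 - lam * (1 - c1))"
      proof -
        have "0 \<le> c1 * lam" using c1 l by simp
        then have "0 \<le> 1 - lam * (1 - c1)" using l by (simp add: algebra_simps)
        then show ?thesis using E by simp
      qed
      then have "al * ((E - 1) * (1 - lam * (1 - c1))) \<le> m * ((E - 1) * (1 - lam * (1 - c1)))"
        using False by (intro mult_right_mono) auto
      then show ?thesis by linarith
    qed
    also have "\<dots> = al * dd"
    proof -
      have "al * (lam * ((1 - c1) * E + c2 - 1)) = lam * (al * (1 - c1) * E + al * (c2 - c1) - al * (1 - c1))"
        by (simp add: algebra_simps)
      also have "\<dots> = lam * (al * (1 - c1) * E + (1 - c1) - al * (1 - c1))" using al by simp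
      finally show ?thesis unfolding dd_def by (simp add: algebra_simps)
    qed
    finally show ?thesis unfolding al_def dd_def by linarith
  qed
qed

lemma counting:
  fixes M :: "nat \<Rightarrow> nat \<Rightarrow> real" and I :: "nat set"
  assumes I: "finite I" "I \<noteq> {}" and E: "0 \<le> E"
    and nn: "\<And>i j. i \<in> I \<Longrightarrow> j \<in> I \<Longrightarrow> 0 \<le> M i j"
    and ldp: "\<And>i j. i \<in> I \<Longrightarrow> j \<in> I \<Longrightarrow> M i i \<le> E * M i j + d"
    and col: "\<And>j. j \<in> I \<Longrightarrow> (\<Sum>i\<in>I. M i j) \<le> 1"
    and pos: "0 < E + real (card I) - 1"
  shows "\<exists>i\<in>I. M i i \<le> (E + (real (card I) - 1) * d) / (E + real (card I) - 1)"
proof (rule ccontr)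
  define k where "k = real (card I)"
  define qs where "qs = (E + (k - 1) * d) / (E + k - 1)"
  assume "\<not> ?thesis"
  then have gt: "\<And>i. i \<in> I \<Longrightarrow> qs < M i i" unfolding qs_def k_def by auto
  have row: "(k - 1 + E) * M i i \<le> E * (\<Sum>j\<in>I. M i j) + (k - 1) * d" if i: "i \<in> I" for i
  proof -
    have "card I \<ge> 1" using I by (simp add: Suc_le_eq card_gt_0_iff)
    then have c: "real (card (I - {i})) = k - 1" using i I unfolding k_def by (simp add: of_nat_diff)
    have "(\<Sum>j\<in>I - {i}. M i i) \<le> (\<Sum>j\<in>I - {i}. E * M i j + d)"
      using ldp i by (intro sum_mono) auto
    then have "(k - 1) * M i i \<le> E * (\<Sum>j\<in>I - {i}. M i j) + (k - 1) * d"
      using c by (simp add: sum.distrib sum_distrib_left[symmetric])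
    moreover have "(\<Sum>j\<in>I - {i}. M i j) = (\<Sum>j\<in>I. M i j) - M i i"
      using i I by (simp add: sum_diff1)
    ultimately show ?thesis by (simp add: algebra_simps)
  qed
  have "(k - 1 + E) * (\<Sum>i\<in>I. M i i) = (\<Sum>i\<in>I. (k - 1 + E) * M i i)"
    by (simp add: sum_distrib_left)
  also have "\<dots> \<le> (\<Sum>i\<in>I. E * (\<Sum>j\<in>I. M i j) + (k - 1) * d)"
    by (rule sum_mono) (rule row)
  also have "\<dots> = E * (\<Sum>j\<in>I. \<Sum>i\<in>I. M i j) + k * ((k - 1) * d)"
  proof -
    have "(\<Sum>i\<in>I. E * (\<Sum>j\<in>I. M i j) + (k - 1) * d) = E * (\<Sum>i\<in>I. \<Sum>j\<in>I. M i j) + k * ((k - 1) * d)"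
      by (simp add: sum.distrib sum_distrib_left k_def)
    also have "(\<Sum>i\<in>I. \<Sum>j\<in>I. M i j) = (\<Sum>j\<in>I. \<Sum>i\<in>I. M i j)" by (rule sum.swap)
    finally show ?thesis .
  qed
  also have "(\<Sum>j\<in>I. \<Sum>i\<in>I. M i j) \<le> k"
    using sum_mono[of I "\<lambda>j. \<Sum>i\<in>I. M i j" "\<lambda>_. 1"] col unfolding k_def by auto
  then have "E * (\<Sum>j\<in>I. \<Sum>i\<in>I. M i j) \<le> E * k" using E by (intro mult_left_mono)
  then have "E * (\<Sum>j\<in>I. \<Sum>i\<in>I. M i j) + k * ((k - 1) * d) \<le> E * k + k * ((k - 1) * d)" by simp
  finally have A: "(k - 1 + E) * (\<Sum>i\<in>I. M i i) \<le> k * (E + (k - 1) * d)" by (simp add: algebra_simps)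
  have "(\<Sum>i\<in>I. qs) < (\<Sum>i\<in>I. M i i)" using gt I by (intro sum_strict_mono) auto
  then have "k * qs < (\<Sum>i\<in>I. M i i)" unfolding k_def by simp
  then have "(k - 1 + E) * (k * qs) < (k - 1 + E) * (\<Sum>i\<in>I. M i i)"
    using pos unfolding k_def by (intro mult_strict_left_mono) auto
  moreover have "(k - 1 + E) * (k * qs) = k * (E + (k - 1) * d)"
    using pos unfolding qs_def k_def by (simp add: field_simps)
  ultimately show False using A by simp
qed

lemma fdiv_LB0:
  fixes P Q :: "'a measure"
  assumes P: "prob_space P" and Q: "prob_space Q" and sQ: "sets Q = sets P" and A: "A \<in> sets P"
    and PA0: "measure P (space P - A) = 0"
    and on: "\<And>p q. 0 \<le> p \<Longrightarrow> 0 \<le> q \<Longrightarrow> ereal (s2 * p + b2 * q) \<le> fdiv_pt f p q"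
    and off: "\<And>q. 0 \<le> q \<Longrightarrow> ereal (b1 * q) \<le> fdiv_pt f 0 q"
  shows "ereal (s2 * measure P A + b2 * measure Q A + b1 * (1 - measure Q A)) \<le> fdiv f P Q"
proof -
  interpret P: prob_space P by fact
  interpret Q: prob_space Q by fact
  define \<nu> where "\<nu> = nuM P Q"
  define p where "p = (\<lambda>x. enn2real (RN_deriv \<nu> P x))"
  have nb: "sets \<nu> = sets P" "space \<nu> = space P" "finite_measure \<nu>"
    using nu_basic[OF P.finite_measure_axioms Q.finite_measure_axioms sQ] unfolding \<nu>_def by auto
  have ac: "absolutely_continuous \<nu> P"
    using nu_ac[OF P.finite_measure_axioms Q.finite_measure_axioms sQ] unfolding \<nu>_def by auto
  note RP = RN_facts[OF nb(3) P.finite_measure_axioms nb(1)[symmetric] ac(1)]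
  define B where "B = space \<nu> - A"
  have B: "B \<in> sets \<nu>" unfolding B_def using A nb by auto
  have iBp: "integrable \<nu> (\<lambda>x. indicator B x * p x)"
    using integrable_mult_indicator[OF B RP(5)] unfolding p_def by simp
  have "(\<integral>x. indicator B x * p x \<partial>\<nu>) = 0"
    using RP(6)[OF B] PA0 nb unfolding p_def B_def by simp
  then have "AE x in \<nu>. indicator B x * p x = 0"
    using integral_nonneg_eq_0_iff_AE[OF iBp] by (simp add: p_def)
  then have ae: "AE x in \<nu>. x \<notin> A \<longrightarrow> p x = 0"
    using AE_space by eventually_elim (auto simp: B_def indicator_def)
  have "ereal (s2 * measure P A + b2 * measure Q A + 0 * (1 - measure P A) + b1 * (1 - measure Q A)) \<le> fdiv f P Q"
  proof (rule fdiv_LB[OF P Q sQ A on])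
    show "AE x in nuM P Q. x \<notin> A \<longrightarrow> ereal (0 * enn2real (RN_deriv (nuM P Q) P x) + b1 * enn2real (RN_deriv (nuM P Q) Q x))
        \<le> fdiv_pt f (enn2real (RN_deriv (nuM P Q) P x)) (enn2real (RN_deriv (nuM P Q) Q x))"
      using ae unfolding \<nu>_def p_def by eventually_elim (auto intro: off)
  qed auto
  then show ?thesis by simp
qed

theorem proposition4:
  fixes \<mu> :: "'a measure" and c1 c2 \<epsilon> \<delta> :: real and k :: nat and f :: "real \<Rightarrow> real"
  assumes "prob_space \<mu>"
    and "0 \<le> c1" "c1 < 1" "1 < c2"
    and "real k = (c2 - c1) / (1 - c1)"
    and "0 \<le> \<epsilon>" "0 \<le> \<delta>" "\<delta> \<le> 1"
    and "\<delta> \<le> (c2 - c1 * exp \<epsilon>) * (1 - c1) / (c2 - c1)"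
    and "decomposable \<mu> ((1 - c1) / (c2 - c1)) k 1"
    and "convex_on {0<..} f" "f 1 = 0"
  shows "let PP = Ptilde c1 c2 \<mu>;
             r1 = c1 / (c2 - c1) * (((1 - c1) * exp \<epsilon> + c2 - 1) / (1 - \<delta>));
             r2 = c2 / (c2 - c1) * (((1 - c1) * exp \<epsilon> + c2 - 1)
                    / (exp \<epsilon> + (c2 - 1) / (1 - c1) * \<delta>));
             lam = (exp \<epsilon> + (c2 - c1) / (1 - c1) * \<delta> - 1) / ((1 - c1) * exp \<epsilon> + c2 - 1);
             Qstar = (\<lambda>P. mixture lam P \<mu>)
         in minimax_risk \<mu> PP \<epsilon> \<delta> f
              = ereal ((1 - r1) / (r2 - r1)) * f_ext f r2 + ereal ((r2 - 1) / (r2 - r1)) * f_ext f r1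
            \<and> Qstar \<in> samplers \<mu> PP \<epsilon> \<delta>
            \<and> (SUP P\<in>PP. fdiv f P (Qstar P)) = minimax_risk \<mu> PP \<epsilon> \<delta> f"
proof -
  note mu = assms(1)
  note c1 = assms(2) and c1' = assms(3) and c2 = assms(4) and kK = assms(5)
  note eps = assms(6) and d0 = assms(7) and d1 = assms(8) and dB = assms(9)
  note dec = assms(10) and f = assms(11) and f1 = assms(12)
  interpret mu: prob_space \<mu> by fact
  define E where "E = exp \<epsilon>"
  define K where "K = (c2 - c1) / (1 - c1)"
  define al where "al = (1 - c1) / (c2 - c1)"
  define D where "D = (1 - c1) * E + c2 - 1"
  define lam where "lam = (E + K * \<delta> - 1) / D"
  define r1 where "r1 = c1 / (c2 - c1) * (D / (1 - \<delta>))"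
  define r2 where "r2 = c2 / (c2 - c1) * (D / (E + (c2 - 1) / (1 - c1) * \<delta>))"
  define qs where "qs = al * (1 + lam * (c2 - 1))"
  define PP where "PP = Ptilde c1 c2 \<mu>"
  define Qs where "Qs = (\<lambda>P. mixture lam P \<mu>)"
  define V where "V = ereal qs * f_ext f r2 + ereal (1 - qs) * f_ext f r1"
  define a2 where "a2 = 1 + lam * (c2 - 1)"
  define b1 where "b1 = 1 - lam * (1 - c1)"
  have E1: "1 \<le> E" unfolding E_def using eps by simp
  have c21: "0 < c2 - c1" "0 < 1 - c1" using c1' c2 by auto
  have nz: "c2 - c1 \<noteq> 0" "1 - c1 \<noteq> 0" using c21 by auto
  have Keq: "K * (1 - c1) = c2 - c1" unfolding K_def using nz by simp
  have aleq: "al * (c2 - c1) = 1 - c1" unfolding al_def using nz by simp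
  have Kal: "K * al = 1"
  proof -
    have "(K * al) * (c2 - c1) = 1 * (c2 - c1)" using Keq aleq by (simp add: mult.assoc)
    then show ?thesis using nz by (simp only: mult_cancel_right) simp
  qed
  have K1: "1 < K" unfolding K_def using c21 c2 by (simp add: less_divide_eq)
  have al0: "0 < al" unfolding al_def using c21 by simp
  have k2: "2 \<le> k" using K1 kK unfolding K_def by linarith
  have D0: "0 < D" unfolding D_def using c21 c2 E1 by (smt (verit) mult_nonneg_nonneg)
  have KD: "K * \<delta> \<le> c2 - c1 * E"
  proof -
    have "(c2 - c1 * E) * (1 - c1) / (c2 - c1) = (c2 - c1 * E) * al" unfolding al_def by simp
    then have "\<delta> \<le> (c2 - c1 * E) * al" using dB unfolding E_def by simp
    then have "K * \<delta> \<le> K * ((c2 - c1 * E) * al)" using K1 by (intro mult_left_mono) auto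
    also have "\<dots> = (c2 - c1 * E) * (K * al)" by (simp add: algebra_simps)
    finally show ?thesis using Kal by simp
  qed
  have Kd0: "0 \<le> K * \<delta>" using K1 d0 by simp
  have lam0: "0 \<le> lam" unfolding lam_def using E1 Kd0 D0 by (intro divide_nonneg_pos) auto
  have lam1: "lam \<le> 1" unfolding lam_def using KD D0 unfolding D_def by (simp add: divide_le_eq algebra_simps)
  have c1d: "c1 \<le> 1 - \<delta>"
  proof -
    have "c1 * 1 \<le> c1 * E" using c1 E1 by (intro mult_left_mono) auto
    then have "K * \<delta> \<le> K * (1 - c1)" using KD Keq by simp
    then show ?thesis using K1 by simp
  qed
  have Km1e: "(K - 1) * (1 - c1) = c2 - 1" using Keq by (simp add: algebra_simps)
  have Km1: "(c2 - 1) / (1 - c1) = K - 1" using Km1e nz by (simp add: divide_eq_eq)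
  have "0 \<le> lam * (c2 - 1)" using lam0 c2 by simp
  then have a2pos: "0 < a2" unfolding a2_def by simp
  have lc1: "lam * (1 - c1) \<le> 1 * 1" by (rule mult_mono) (use lam0 lam1 c1 c1' in auto)
  have b1nn: "0 \<le> b1" unfolding b1_def using lc1 by simp
  have lamD: "lam * D = E + K * \<delta> - 1" unfolding lam_def using D0 by simp
  have cK: "(c2 - 1) * K = (c2 - c1) * (K - 1)" using Keq by (simp add: algebra_simps)
  have a2D: "a2 * D = (c2 - c1) * (E + (K - 1) * \<delta>)"
  proof -
    have "a2 * D = D + (c2 - 1) * (lam * D)" unfolding a2_def by (simp add: algebra_simps)
    also have "\<dots> = D + (c2 - 1) * (E + K * \<delta> - 1)" using lamD by simp
    also have "\<dots> = (c2 - c1) * E + ((c2 - 1) * K) * \<delta>" unfolding D_def by (simp add: algebra_simps)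
    also have "\<dots> = (c2 - c1) * (E + (K - 1) * \<delta>)" unfolding cK by (simp add: algebra_simps)
    finally show ?thesis .
  qed
  have b1D: "b1 * D = (c2 - c1) * (1 - \<delta>)"
  proof -
    have "b1 * D = D - (1 - c1) * (lam * D)" unfolding b1_def by (simp add: algebra_simps)
    also have "\<dots> = D - (1 - c1) * (E + K * \<delta> - 1)" using lamD by simp
    also have "\<dots> = (c2 - c1) - (K * (1 - c1)) * \<delta>" unfolding D_def by (simp add: algebra_simps)
    also have "\<dots> = (c2 - c1) * (1 - \<delta>)" unfolding Keq by (simp add: algebra_simps)
    finally show ?thesis .
  qed
  have Xpos: "0 < E + (K - 1) * \<delta>" using E1 K1 d0 by (smt (verit) mult_nonneg_nonneg)
  have r2a: "r2 = c2 / a2"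
  proof -
    have "a2 = (c2 - c1) * (E + (K - 1) * \<delta>) / D" using a2D D0 by (simp add: eq_divide_eq)
    then have "c2 / a2 = c2 * D / ((c2 - c1) * (E + (K - 1) * \<delta>))" by simp
    also have "\<dots> = r2" unfolding r2_def Km1 by simp
    finally show ?thesis by simp
  qed
  have r1b: "r1 = c1 / b1"
  proof (cases "\<delta> = 1")
    case True
    then have "b1 = 0" using b1D D0 by simp
    then show ?thesis unfolding r1_def using True by simp
  next
    case False
    then have "b1 = (c2 - c1) * (1 - \<delta>) / D" using b1D D0 by (simp add: eq_divide_eq)
    then have "c1 / b1 = c1 * D / ((c2 - c1) * (1 - \<delta>))" by simp
    also have "\<dots> = r1" unfolding r1_def by simp
    finally show ?thesis by simp
  qed
  have b10: "b1 = 0 \<Longrightarrow> c1 = 0"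
  proof -
    assume "b1 = 0"
    then have "\<delta> = 1" using b1D D0 c21 by simp
    then show "c1 = 0" using c1d c1 by simp
  qed
  have tot: "c2 * al + c1 * (1 - al) = 1"
  proof -
    have "c2 * al + c1 * (1 - al) = c1 + al * (c2 - c1)" by (simp add: algebra_simps)
    then show ?thesis using aleq by simp
  qed
  have al_c: "al * (c2 - 1) = (1 - al) * (1 - c1)"
  proof -
    have "al * (c2 - 1) - (1 - al) * (1 - c1) = al * (c2 - c1) - (1 - c1)" by (simp add: algebra_simps)
    then show ?thesis using aleq by simp
  qed
  have qsr2: "qs * r2 = c2 * al" unfolding qs_def r2a a2_def[symmetric] using a2pos by simp
  have qs1: "1 - qs = (1 - al) * b1"
  proof -
    have "1 - qs - (1 - al) * b1 = (1 - al) * (1 - c1) * lam - al * (c2 - 1) * lam"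
      unfolding qs_def b1_def by (simp add: algebra_simps)
    then show ?thesis using al_c by simp
  qed
  have qsr1: "(1 - qs) * r1 = c1 * (1 - al)"
  proof (cases "b1 = 0")
    case True
    then show ?thesis using b10 r1b by simp
  next
    case False
    then show ?thesis unfolding qs1 r1b by simp
  qed
  have qs_count: "qs = (E + (K - 1) * \<delta>) / (E + K - 1)"
  proof -
    have Dk: "D = (1 - c1) * (E + K - 1)"
    proof -
      have "(1 - c1) * (E + K - 1) = (1 - c1) * E + (K - 1) * (1 - c1)" by (simp add: algebra_simps)
      then show ?thesis unfolding D_def Km1e by simp
    qed
    have "qs * D = al * (a2 * D)" unfolding qs_def a2_def by (simp add: algebra_simps)
    also have "\<dots> = (al * (c2 - c1)) * (E + (K - 1) * \<delta>)" unfolding a2D by (simp add: algebra_simps)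
    also have "\<dots> = (1 - c1) * (E + (K - 1) * \<delta>)" unfolding aleq ..
    finally have "qs * ((1 - c1) * (E + K - 1)) = (1 - c1) * (E + (K - 1) * \<delta>)" unfolding Dk .
    then have "(qs * (E + K - 1)) * (1 - c1) = (E + (K - 1) * \<delta>) * (1 - c1)" by (simp add: algebra_simps)
    then have "qs * (E + K - 1) = E + (K - 1) * \<delta>" using nz by simp
    moreover have "0 < E + K - 1" using E1 K1 by simp
    ultimately show ?thesis by (simp add: eq_divide_eq)
  qed
  have dAl: "\<delta> = al * (lam * D - (E - 1))"
  proof -
    have "al * (lam * D - (E - 1)) = (K * al) * \<delta>" unfolding lamD by (simp add: algebra_simps)
    then show ?thesis using Kal by simp
  qed
  have PPD: "prob_space P" "sets P = sets \<mu>" if "P \<in> PP" for P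
    using that unfolding PP_def Ptilde_def by auto
  have mixP: "prob_space (Qs P)" "sets (Qs P) = sets \<mu>"
      "\<And>A. A \<in> sets \<mu> \<Longrightarrow> measure (Qs P) A = lam * measure P A + (1 - lam) * measure \<mu> A"
    if "P \<in> PP" for P
    using mix_basic[OF PPD(1)[OF that] mu PPD(2)[OF that] lam0 lam1] unfolding Qs_def by auto
  have xb: "c1 * measure \<mu> A \<le> measure P A" "measure P A \<le> c2 * measure \<mu> A"
      "measure P A \<le> 1 - c1 * (1 - measure \<mu> A)"
    if P: "P \<in> PP" and A: "A \<in> sets \<mu>" for P A
  proof -
    have c12: "c1 \<le> c2" using c1' c2 by simp
    show "c1 * measure \<mu> A \<le> measure P A" "measure P A \<le> c2 * measure \<mu> A"
      using Pt_bounds[OF mu P[unfolded PP_def] c1 c12 A] by auto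
    interpret Pp: prob_space P using PPD[OF P] by simp
    have sp: "space P = space \<mu>" using PPD(2)[OF P] by (rule sets_eq_imp_space_eq)
    have B: "space \<mu> - A \<in> sets \<mu>" using A by auto
    have "c1 * measure \<mu> (space \<mu> - A) \<le> measure P (space \<mu> - A)"
      using Pt_bounds[OF mu P[unfolded PP_def] c1 c12 B] by auto
    moreover have "measure P (space \<mu> - A) = 1 - measure P A"
      using Pp.prob_compl[of A] A PPD(2)[OF P] sp by simp
    moreover have "measure \<mu> (space \<mu> - A) = 1 - measure \<mu> A" using mu.prob_compl[OF A] .
    ultimately show "measure P A \<le> 1 - c1 * (1 - measure \<mu> A)" by simp
  qed
  have QsS: "Qs \<in> samplers \<mu> PP \<epsilon> \<delta>"
    unfolding samplers_def
  proof (intro CollectI conjI ballI)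
    fix P assume P: "P \<in> PP"
    show "prob_space (Qs P)" "sets (Qs P) = sets \<mu>" using mixP[OF P] by auto
  next
    fix P P' A assume P: "P \<in> PP" and P': "P' \<in> PP" and A: "A \<in> sets \<mu>"
    have dd: "0 \<le> lam * ((1 - c1) * E + c2 - 1) - (E - 1)"
      using lamD K1 d0 unfolding D_def by simp
    have "lam * measure P A + (1 - lam) * measure \<mu> A \<le> E * (lam * measure P' A + (1 - lam) * measure \<mu> A)
        + (1 - c1) / (c2 - c1) * (lam * ((1 - c1) * E + c2 - 1) - (E - 1))"
      by (rule LDP_ineq[OF c1 c1' c2 E1 lam0 lam1 measure_nonneg mu.prob_le_1 xb(2)[OF P A] xb(3)[OF P A] xb(1)[OF P' A] dd])
    also have "(1 - c1) / (c2 - c1) * (lam * ((1 - c1) * E + c2 - 1) - (E - 1)) = \<delta>"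
      using dAl unfolding al_def D_def by simp
    finally show "measure (Qs P) A \<le> exp \<epsilon> * measure (Qs P') A + \<delta>"
      using mixP(3)[OF P A] mixP(3)[OF P' A] unfolding E_def by simp
  qed
  have LT: "0 < b1 \<and> r1 < 1 \<and> 1 < r2 \<and> qs * (r2 - r1) = 1 - r1 \<and> qs < 1 \<and> c1 < b1" if lt: "lam < 1"
  proof -
    have bc: "b1 - c1 = (1 - lam) * (1 - c1)" unfolding b1_def by (simp add: algebra_simps)
    have "0 < (1 - lam) * (1 - c1)" using lt c21 by simp
    then have bc1: "c1 < b1" using bc by simp
    then have b1p: "0 < b1" using c1 by simp
    have r1l: "r1 < 1" unfolding r1b using b1p bc1 by simp
    have ac: "c2 - a2 = (1 - lam) * (c2 - 1)" unfolding a2_def by (simp add: algebra_simps)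
    have "0 < (1 - lam) * (c2 - 1)" using lt c2 by simp
    then have "a2 < c2" using ac by simp
    then have r2g: "1 < r2" unfolding r2a using a2pos by simp
    have q: "qs * (r2 - r1) = 1 - r1"
    proof -
      have "qs * r1 = r1 - c1 * (1 - al)" using qsr1 by (simp add: algebra_simps)
      then have "qs * (r2 - r1) = c2 * al + c1 * (1 - al) - r1" using qsr2 by (simp add: algebra_simps)
      then show ?thesis using tot by simp
    qed
    have "1 - qs = (r2 - 1) / (r2 - r1)"
    proof -
      have "(1 - qs) * (r2 - r1) = r2 - 1" using q by (simp add: algebra_simps)
      then show ?thesis using r1l r2g by (simp add: eq_divide_eq)
    qed
    moreover have "0 < (r2 - 1) / (r2 - r1)" using r1l r2g by simp
    ultimately have "qs < 1" by simp
    then show ?thesis using b1p r1l r2g q bc1 by auto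
  qed
  have fe1: "f_ext f 1 = 0" unfolding f_ext_def using f1 by (simp add: zero_ereal_def)
  have V0: "V = 0" if l1: "lam = 1"
  proof -
    have r2e: "r2 = 1" unfolding r2a a2_def l1 using c2 by simp
    show ?thesis
    proof (cases "c1 = 0")
      case True
      have r1e: "r1 = 0" unfolding r1b True by simp
      have "qs = 1" unfolding qs_def l1 using tot True by (simp add: mult.commute)
      then show ?thesis unfolding V_def r1e r2e fe1 by simp
    next
      case False
      have r1e: "r1 = 1" unfolding r1b b1_def l1 using False by simp
      show ?thesis unfolding V_def r1e r2e fe1 by simp
    qed
  qed
  have r2p: "0 < r2" unfolding r2a using a2pos c2 by simp
  have fe2: "f_ext f r2 = ereal (f r2)" unfolding f_ext_def using r2p by simp
  have UB: "fdiv f P (Qs P) \<le> V" if P: "P \<in> PP" for P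
  proof -
    note PD = PPD[OF P] and QD = mixP[OF P]
    have sQ: "sets (Qs P) = sets P" using PD QD by simp
    show ?thesis
    proof (cases "lam < 1")
      case False
      then have l1: "lam = 1" using lam1 by simp
      have "fdiv f P (Qs P) \<le> ereal (0 + 0)"
      proof (rule fdiv_UB[OF PD(1) QD(1) sQ f, of 1 1])
        fix A assume A: "A \<in> sets P"
        then have "measure (Qs P) A = measure P A" using QD(3)[of A] PD l1 by simp
        then show "1 * measure (Qs P) A \<le> measure P A" "measure P A \<le> 1 * measure (Qs P) A" by auto
      next
        fix t :: real assume "0 < t" "1 \<le> t" "t \<le> 1"
        then show "f t \<le> 0 + 0 * t" using f1 by simp
      qed auto
      then show ?thesis using V0[OF l1] by (simp add: zero_ereal_def)
    next
      case True
      note lt = LT[OF True]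
      have hi: "measure P A \<le> r2 * measure (Qs P) A" if A: "A \<in> sets P" for A
      proof -
        have A': "A \<in> sets \<mu>" using A PD by simp
        have x: "measure P A \<le> c2 * measure \<mu> A" using xb(2)[OF P A'] .
        have "(1 - lam) * measure P A \<le> (1 - lam) * (c2 * measure \<mu> A)"
          using x True by (intro mult_left_mono) auto
        then have "a2 * measure P A \<le> c2 * (lam * measure P A + (1 - lam) * measure \<mu> A)"
          unfolding a2_def by (simp add: algebra_simps)
        then have "measure P A \<le> c2 * (lam * measure P A + (1 - lam) * measure \<mu> A) / a2"
          using a2pos by (simp add: le_divide_eq mult.commute)
        then show ?thesis unfolding r2a QD(3)[OF A'] by simp
      qed
      have lo: "r1 * measure (Qs P) A \<le> measure P A" if A: "A \<in> sets P" for A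
      proof -
        have A': "A \<in> sets \<mu>" using A PD by simp
        have x: "c1 * measure \<mu> A \<le> measure P A" using xb(1)[OF P A'] .
        have "(1 - lam) * (c1 * measure \<mu> A) \<le> (1 - lam) * measure P A"
          using x True by (intro mult_left_mono) auto
        then have "c1 * (lam * measure P A + (1 - lam) * measure \<mu> A) \<le> b1 * measure P A"
          unfolding b1_def by (simp add: algebra_simps)
        then have "c1 * (lam * measure P A + (1 - lam) * measure \<mu> A) / b1 \<le> measure P A"
          using lt by (simp add: divide_le_eq mult.commute)
        then show ?thesis unfolding r1b QD(3)[OF A'] by simp
      qed
      have r1nn: "0 \<le> r1" unfolding r1b using c1 b1nn by simp
      show ?thesis
      proof (cases "c1 = 0")
        case False
        then have r1p: "0 < r1" unfolding r1b using c1 lt by simp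
        define m where "m = (f r2 - f r1) / (r2 - r1)"
        have "fdiv f P (Qs P) \<le> ereal ((f r1 - m * r1) + m)"
        proof (rule fdiv_UB[OF PD(1) QD(1) sQ f r1nn r2p lo hi])
          fix t :: real assume "0 < t" "r1 \<le> t" "t \<le> r2"
          then have "f t \<le> f r1 + m * (t - r1)"
            using chord_le[OF f r1p, of t r2] lt unfolding m_def by simp
          moreover have "f r1 + m * (t - r1) = (f r1 - m * r1) + m * t" by (simp add: algebra_simps)
          ultimately show "f t \<le> (f r1 - m * r1) + m * t" by simp
        qed (use r1p in auto)
        also have "(f r1 - m * r1) + m = qs * f r2 + (1 - qs) * f r1"
        proof -
          have q: "1 - r1 = qs * (r2 - r1)" using lt by simp
          have mr: "m * (r2 - r1) = f r2 - f r1" unfolding m_def using lt by simp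
          have "m * (1 - r1) = qs * (m * (r2 - r1))" unfolding q by (simp add: algebra_simps)
          then have "m * (1 - r1) = qs * (f r2 - f r1)" unfolding mr .
          then show ?thesis by (simp add: algebra_simps)
        qed
        also have "ereal (qs * f r2 + (1 - qs) * f r1) = V"
          unfolding V_def fe2 f_ext_def using r1p r2p by simp
        finally show ?thesis .
      next
        case True
        have r1e: "r1 = 0" unfolding r1b True by simp
        have qr: "qs * r2 = 1" using qsr2 tot True by simp
        have "f_at0 f \<noteq> - \<infinity>"
        proof -
          obtain s sr where "s \<le> sr" and L: "\<forall>s' t. s \<le> s' \<and> s' \<le> sr \<and> 0 < t \<longrightarrow> f 1 + s' * (t - 1) \<le> f t"
            using subgrad[OF f, of 1] by auto
          have line: "\<And>t. 0 < t \<Longrightarrow> f 1 + s * (t - 1) \<le> f t" using L \<open>s \<le> sr\<close> by auto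
          have "\<And>t. 0 < t \<Longrightarrow> s * t + (- s) \<le> f t" using line f1 by (auto simp: algebra_simps)
          then have "ereal (- s) \<le> f_at0 f" by (rule f_at0_ge[OF f])
          then show ?thesis by auto
        qed
        then consider "f_at0 f = \<infinity>" | F0 where "f_at0 f = ereal F0" by (cases "f_at0 f") auto
        then show ?thesis
        proof cases
          case 1
          have "V = \<infinity>" unfolding V_def r1e f_ext_def fe2 using 1 lt r2p by simp
          then show ?thesis by simp
        next
          case 2
          define m where "m = (f r2 - F0) / r2"
          have "fdiv f P (Qs P) \<le> ereal (F0 + m)"
          proof (rule fdiv_UB[OF PD(1) QD(1) sQ f r1nn r2p lo hi])
            fix t :: real assume "0 < t" "r1 \<le> t" "t \<le> r2"
            then show "f t \<le> F0 + m * t"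
              using chord_from0[OF f 2, of t r2] unfolding m_def by (simp add: mult.commute)
          qed (use 2 in auto)
          also have "F0 + m = qs * f r2 + (1 - qs) * F0"
          proof -
            have "qs = 1 / r2" using qr r2p by (simp add: eq_divide_eq mult.commute)
            then show ?thesis unfolding m_def by (simp add: algebra_simps diff_divide_distrib)
          qed
          also have "ereal (qs * f r2 + (1 - qs) * F0) = V"
            unfolding V_def fe2 f_ext_def r1e using 2 r2p by simp
          finally show ?thesis .
        qed
      qed
    qed
  qed
  obtain A :: "nat \<Rightarrow> 'a set" where Ad: "\<And>i. i \<in> {1..k} \<Longrightarrow> A i \<in> sets \<mu> \<and> measure \<mu> (A i) = al"
    and Acard: "\<And>x. x \<in> space \<mu> \<Longrightarrow> card {i \<in> {1..k}. x \<in> A i} \<le> 1"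
    using dec unfolding decomposable_def al_def by blast
  have Adisj: "disjoint_family_on A {1..k}"
    unfolding disjoint_family_on_def
  proof (intro ballI impI)
    fix i j assume ij: "i \<in> {1..k}" "j \<in> {1..k}" "i \<noteq> j"
    show "A i \<inter> A j = {}"
    proof (rule ccontr)
      assume "A i \<inter> A j \<noteq> {}"
      then obtain x where x: "x \<in> A i" "x \<in> A j" by auto
      have "x \<in> space \<mu>" using x Ad[OF ij(1)] sets.sets_into_space by blast
      then have "card {i \<in> {1..k}. x \<in> A i} \<le> 1" by (rule Acard)
      moreover have "{i, j} \<subseteq> {i \<in> {1..k}. x \<in> A i}" using ij x by auto
      then have "card {i, j} \<le> card {i \<in> {1..k}. x \<in> A i}" by (intro card_mono) auto
      ultimately show False using ij by simp
    qed
  qed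
  define Pi where "Pi = (\<lambda>i. density \<mu> (\<lambda>x. ennreal (if x \<in> A i then c2 else c1)))"
  have PiD: "Pi i \<in> PP" "measure (Pi i) (A i) = c2 * al" "prob_space (Pi i)" "sets (Pi i) = sets \<mu>"
    if i: "i \<in> {1..k}" for i
  proof -
    have c12: "c1 \<le> c2" using c1' c2 by simp
    note D = dens_in_Pt[OF mu conjunct1[OF Ad[OF i]] c1 c12, unfolded conjunct2[OF Ad[OF i]], OF tot]
    show "Pi i \<in> PP" "measure (Pi i) (A i) = c2 * al" "prob_space (Pi i)" "sets (Pi i) = sets \<mu>"
      using D unfolding Pi_def PP_def by auto
  qed
  have k1: "1 \<in> {1..k}" using k2 by simp
  have LB: "V \<le> (SUP P\<in>PP. fdiv f P (Q P))" if QS: "Q \<in> samplers \<mu> PP \<epsilon> \<delta>" for Q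
  proof -
    have QD: "prob_space (Q P)" "sets (Q P) = sets \<mu>" if "P \<in> PP" for P
      using QS that unfolding samplers_def by auto
    have ldp: "measure (Q P) B \<le> exp \<epsilon> * measure (Q P') B + \<delta>" if "P \<in> PP" "P' \<in> PP" "B \<in> sets \<mu>" for P P' B
      using QS that unfolding samplers_def by auto
    have sup: "fdiv f (Pi i) (Q (Pi i)) \<le> (SUP P\<in>PP. fdiv f P (Q P))" if "i \<in> {1..k}" for i
      using PiD(1)[OF that] by (rule SUP_upper)
    have sQi: "sets (Q (Pi i)) = sets (Pi i)" if "i \<in> {1..k}" for i
      using QD(2)[OF PiD(1)[OF that]] PiD(4)[OF that] by simp
    have key: "V \<le> fdiv f (Pi i) (Q (Pi i))" if i: "i \<in> {1..k}" and a: "measure (Q (Pi i)) (A i) \<le> qs" for i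
    proof -
      note Pp = PiD(3)[OF i] and Qp = QD(1)[OF PiD(1)[OF i]] and sQ = sQi[OF i]
      have Ai: "A i \<in> sets (Pi i)" using Ad[OF i] PiD(4)[OF i] by simp
      define pa where "pa = measure (Pi i) (A i)"
      define aa where "aa = measure (Q (Pi i)) (A i)"
      have pa: "pa = qs * r2" unfolding pa_def PiD(2)[OF i] qsr2 by (simp add: mult.commute)
      have pa1: "1 - pa = (1 - qs) * r1" unfolding qsr1 using pa qsr2 tot by simp
      have aq: "aa \<le> qs" using a unfolding aa_def .
      show ?thesis
      proof (cases "lam < 1")
        case False
        then have l1: "lam = 1" using lam1 by simp
        show ?thesis using fdiv_nonneg[OF Pp Qp sQ f f1] V0[OF l1] by simp
      next
        case True
        note lt = LT[OF True]
        obtain s2 sr2 where s2: "s2 \<le> sr2" and left2: "\<forall>t. 0 < t \<and> t < r2 \<longrightarrow> (f r2 - f t) / (r2 - t) \<le> s2"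
          and L2: "\<forall>s t. s2 \<le> s \<and> s \<le> sr2 \<and> 0 < t \<longrightarrow> f r2 + s * (t - r2) \<le> f t"
          using subgrad[OF f r2p] by blast
        define b2 where "b2 = f r2 - s2 * r2"
        have line2: "\<And>t. 0 < t \<Longrightarrow> s2 * t + b2 \<le> f t"
        proof -
          fix t :: real assume "0 < t"
          then have "f r2 + s2 * (t - r2) \<le> f t" using L2 s2 by auto
          then show "s2 * t + b2 \<le> f t" unfolding b2_def by (simp add: algebra_simps)
        qed
        have on: "\<And>p q. 0 \<le> p \<Longrightarrow> 0 \<le> q \<Longrightarrow> ereal (s2 * p + b2 * q) \<le> fdiv_pt f p q"
          by (rule pt_lower[OF f line2])
        show ?thesis
        proof (cases "c1 = 0")
          case False
          then have r1p: "0 < r1" unfolding r1b using c1 lt by simp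
          obtain sl1 s1 where s1: "sl1 \<le> s1" and right1: "\<forall>u. r1 < u \<longrightarrow> s1 \<le> (f u - f r1) / (u - r1)"
            and L1: "\<forall>s t. sl1 \<le> s \<and> s \<le> s1 \<and> 0 < t \<longrightarrow> f r1 + s * (t - r1) \<le> f t"
            using subgrad[OF f r1p] by blast
          define b1' where "b1' = f r1 - s1 * r1"
          have line1: "\<And>t. 0 < t \<Longrightarrow> s1 * t + b1' \<le> f t"
          proof -
            fix t :: real assume "0 < t"
            then have "f r1 + s1 * (t - r1) \<le> f t" using L1 s1 by auto
            then show "s1 * t + b1' \<le> f t" unfolding b1'_def by (simp add: algebra_simps)
          qed
          have r12: "r1 < r2" using lt by simp
          define mm where "mm = (f r2 - f r1) / (r2 - r1)"
          have m2: "mm \<le> s2" using left2 r1p r12 unfolding mm_def by auto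
          have m1: "s1 \<le> mm" using right1 r12 unfolding mm_def by auto
          have mmr: "mm * (r2 - r1) = f r2 - f r1" unfolding mm_def using r12 by simp
          have "mm * r2 \<le> s2 * r2" using m2 r2p by (intro mult_right_mono) auto
          moreover have "s1 * r1 \<le> mm * r1" using m1 r1p by (intro mult_right_mono) auto
          ultimately have bb: "b2 \<le> b1'" unfolding b2_def b1'_def using mmr by (simp add: algebra_simps)
          have "ereal (s2 * pa + b2 * aa + s1 * (1 - pa) + b1' * (1 - aa)) \<le> fdiv f (Pi i) (Q (Pi i))"
          proof -
            have off1: "AE x in nuM (Pi i) (Q (Pi i)). x \<notin> A i \<longrightarrow>
                ereal (s1 * enn2real (RN_deriv (nuM (Pi i) (Q (Pi i))) (Pi i) x) + b1' * enn2real (RN_deriv (nuM (Pi i) (Q (Pi i))) (Q (Pi i)) x))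
                \<le> fdiv_pt f (enn2real (RN_deriv (nuM (Pi i) (Q (Pi i))) (Pi i) x)) (enn2real (RN_deriv (nuM (Pi i) (Q (Pi i))) (Q (Pi i)) x))"
              by (rule AE_I2) (auto intro!: pt_lower[OF f line1])
            show ?thesis unfolding pa_def aa_def using fdiv_LB[OF Pp Qp sQ Ai on off1] .
          qed
          moreover have "qs * f r2 + (1 - qs) * f r1 \<le> s2 * pa + b2 * aa + s1 * (1 - pa) + b1' * (1 - aa)"
          proof -
            have e: "s2 * pa + b2 * aa + s1 * (1 - pa) + b1' * (1 - aa)
                = qs * (s2 * r2 + b2) + (1 - qs) * (s1 * r1 + b1') + (b2 - b1') * (aa - qs)"
              unfolding pa1 unfolding pa by (simp add: algebra_simps)
            have "0 \<le> (b2 - b1') * (aa - qs)" using bb aq by (intro mult_nonpos_nonpos) auto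
            moreover have "s2 * r2 + b2 = f r2" "s1 * r1 + b1' = f r1" unfolding b2_def b1'_def by simp_all
            ultimately show ?thesis unfolding e by simp
          qed
          moreover have "V = ereal (qs * f r2 + (1 - qs) * f r1)"
            unfolding V_def fe2 f_ext_def using r1p r2p by simp
          ultimately show ?thesis by (metis ereal_less_eq(3) order_trans)
        next
          case True
          have r1e: "r1 = 0" unfolding r1b True by simp
          have PA0: "measure (Pi i) (space (Pi i) - A i) = 0"
          proof -
            interpret Pi: prob_space "Pi i" using Pp .
            have "measure (Pi i) (space (Pi i) - A i) = 1 - pa" unfolding pa_def using Ai by (rule Pi.prob_compl)
            then show ?thesis unfolding pa1 r1e by simp
          qed
          have LB0: "ereal (s2 * pa + b2 * aa + B * (1 - aa)) \<le> fdiv f (Pi i) (Q (Pi i))"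
            if B: "ereal B \<le> f_at0 f" for B
          proof -
            have off: "ereal (B * q) \<le> fdiv_pt f 0 q" if q: "0 \<le> q" for q
            proof (cases "q > 0")
              case True
              have "ereal q * ereal B \<le> ereal q * f_at0 f" using B True by (intro ereal_mult_left_mono) auto
              then show ?thesis using True by (simp add: fdiv_pt_def mult.commute)
            next
              case False
              then show ?thesis using q by (simp add: fdiv_pt_def)
            qed
            show ?thesis unfolding pa_def aa_def by (rule fdiv_LB0[OF Pp Qp sQ Ai PA0 on off])
          qed
          have bnd: "qs * f r2 + (1 - qs) * B \<le> s2 * pa + b2 * aa + B * (1 - aa)" if B: "b2 \<le> B" for B
          proof -
            have e: "s2 * pa + b2 * aa + B * (1 - aa) = qs * (s2 * r2 + b2) + (1 - qs) * B + (b2 - B) * (aa - qs)"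
              unfolding pa by (simp add: algebra_simps)
            have "0 \<le> (b2 - B) * (aa - qs)" using B aq by (intro mult_nonpos_nonpos) auto
            moreover have "s2 * r2 + b2 = f r2" unfolding b2_def by simp
            ultimately show ?thesis unfolding e by simp
          qed
          have b2le: "ereal b2 \<le> f_at0 f" by (rule f_at0_ge[OF f line2])
          then consider "f_at0 f = \<infinity>" | F0 where "f_at0 f = ereal F0" by (cases "f_at0 f") auto
          then show ?thesis
          proof cases
            case 1
            have "fdiv f (Pi i) (Q (Pi i)) = \<infinity>"
            proof (rule ereal_top)
              fix T :: real
              define B where "B = max b2 ((T - qs * f r2) / (1 - qs))"
              have q1: "0 < 1 - qs" using lt by simp
              have "T - qs * f r2 \<le> (1 - qs) * B"
                unfolding B_def using q1 by (simp add: max_def field_simps)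
              then have "T \<le> qs * f r2 + (1 - qs) * B" by simp
              also have "\<dots> \<le> s2 * pa + b2 * aa + B * (1 - aa)" by (rule bnd) (simp add: B_def)
              finally have "ereal T \<le> ereal (s2 * pa + b2 * aa + B * (1 - aa))" by simp
              also have "\<dots> \<le> fdiv f (Pi i) (Q (Pi i))" by (rule LB0) (simp add: 1)
              finally show "ereal T \<le> fdiv f (Pi i) (Q (Pi i))" .
            qed
            then show ?thesis by simp
          next
            case 2
            have "ereal (qs * f r2 + (1 - qs) * F0) \<le> ereal (s2 * pa + b2 * aa + F0 * (1 - aa))"
              using bnd[of F0] b2le 2 by simp
            also have "\<dots> \<le> fdiv f (Pi i) (Q (Pi i))" by (rule LB0) (simp add: 2)
            finally show ?thesis unfolding V_def fe2 f_ext_def r1e using 2 r2p by simp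
          qed
        qed
      qed
    qed
    show ?thesis
    proof (cases "lam < 1")
      case False
      then have l1: "lam = 1" using lam1 by simp
      have "0 \<le> fdiv f (Pi 1) (Q (Pi 1))"
        using fdiv_nonneg[OF PiD(3)[OF k1] QD(1)[OF PiD(1)[OF k1]] sQi[OF k1] f f1] .
      then show ?thesis using V0[OF l1] sup[OF k1] by simp
    next
      case True
      define Mx where "Mx = (\<lambda>i j. measure (Q (Pi j)) (A i))"
      have "\<exists>i\<in>{1..k}. Mx i i \<le> (E + (real (card {1..k}) - 1) * \<delta>) / (E + real (card {1..k}) - 1)"
      proof (rule counting[where M = Mx and d = \<delta> and E = E])
        show "finite {1..k}" "{1..k} \<noteq> {}" using k2 by auto
        show "0 \<le> E" using E1 by simp
        show "0 \<le> Mx i j" for i j unfolding Mx_def by simp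
        show "Mx i i \<le> E * Mx i j + \<delta>" if "i \<in> {1..k}" "j \<in> {1..k}" for i j
          unfolding Mx_def E_def using ldp[OF PiD(1)[OF that(1)] PiD(1)[OF that(2)] conjunct1[OF Ad[OF that(1)]]] .
        show "(\<Sum>i\<in>{1..k}. Mx i j) \<le> 1" if j: "j \<in> {1..k}" for j
        proof -
          interpret Qj: prob_space "Q (Pi j)" using QD(1)[OF PiD(1)[OF j]] .
          have "(\<Sum>i\<in>{1..k}. Mx i j) = measure (Q (Pi j)) (\<Union>i\<in>{1..k}. A i)"
            unfolding Mx_def using Ad QD(2)[OF PiD(1)[OF j]] Adisj
            by (intro Qj.finite_measure_finite_Union[symmetric]) auto
          also have "\<dots> \<le> 1" by simp
          finally show ?thesis .
        qed
        show "0 < E + real (card {1..k}) - 1" using E1 k2 by simp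
      qed
      then obtain i where i: "i \<in> {1..k}" and "Mx i i \<le> qs"
        unfolding qs_count using kK unfolding K_def by auto
      then have "V \<le> fdiv f (Pi i) (Q (Pi i))" using key unfolding Mx_def by blast
      then show ?thesis using sup[OF i] by simp
    qed
  qed
  have Vform: "ereal ((1 - r1) / (r2 - r1)) * f_ext f r2 + ereal ((r2 - 1) / (r2 - r1)) * f_ext f r1 = V"
  proof (cases "lam < 1")
    case True
    have bc: "b1 - c1 = (1 - lam) * (1 - c1)" unfolding b1_def by (simp add: algebra_simps)
    have "0 < (1 - lam) * (1 - c1)" using True c21 by simp
    then have bc1: "c1 < b1" using bc by simp
    then have b1p: "0 < b1" using c1 by simp
    have r1l: "r1 < 1" unfolding r1b using b1p bc1 by simp
    have ac: "c2 - a2 = (1 - lam) * (c2 - 1)" unfolding a2_def by (simp add: algebra_simps)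
    have "0 < (1 - lam) * (c2 - 1)" using True c2 by simp
    then have "a2 < c2" using ac by simp
    then have r2g: "1 < r2" unfolding r2a using a2pos by simp
    have "qs * (r2 - r1) = 1 - r1"
    proof -
      have "qs * r1 = r1 - c1 * (1 - al)" using qsr1 by (simp add: algebra_simps)
      then have "qs * (r2 - r1) = c2 * al + c1 * (1 - al) - r1" using qsr2 by (simp add: algebra_simps)
      then show ?thesis using tot by simp
    qed
    then have co1: "(1 - r1) / (r2 - r1) = qs" using r1l r2g by (simp add: field_simps)
    then have co2: "(r2 - 1) / (r2 - r1) = 1 - qs" using r1l r2g by (simp add: field_simps)
    show ?thesis unfolding co1 co2 V_def ..
  next
    case False
    then have l1: "lam = 1" using lam1 by simp
    have r2e: "r2 = 1" unfolding r2a a2_def l1 using c2 by simp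
    have fe: "f_ext f 1 = 0" unfolding f_ext_def using f1 by (simp add: zero_ereal_def)
    show ?thesis
    proof (cases "c1 = 0")
      case True
      have r1e: "r1 = 0" unfolding r1b True by simp
      have "qs = 1" unfolding qs_def l1 using tot True by (simp add: mult.commute)
      then show ?thesis unfolding V_def r1e r2e fe by simp
    next
      case False
      have r1e: "r1 = 1" unfolding r1b b1_def l1 using False by simp
      show ?thesis unfolding V_def r1e r2e fe by simp
    qed
  qed
  have mm: "minimax_risk \<mu> PP \<epsilon> \<delta> f = V"
    unfolding minimax_risk_def
  proof (rule antisym)
    show "(INF Q\<in>samplers \<mu> PP \<epsilon> \<delta>. SUP P\<in>PP. fdiv f P (Q P)) \<le> V"
      by (rule INF_lower2[OF QsS]) (rule SUP_least[OF UB])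
    show "V \<le> (INF Q\<in>samplers \<mu> PP \<epsilon> \<delta>. SUP P\<in>PP. fdiv f P (Q P))"
      by (rule INF_greatest[OF LB])
  qed
  have sup: "(SUP P\<in>PP. fdiv f P (Qs P)) = V"
    by (rule antisym[OF SUP_least[OF UB] LB[OF QsS]])
  have e1: "(exp \<epsilon> + (c2 - c1) / (1 - c1) * \<delta> - 1) / ((1 - c1) * exp \<epsilon> + c2 - 1) = lam"
    unfolding lam_def K_def D_def E_def ..
  have e2: "c1 / (c2 - c1) * (((1 - c1) * exp \<epsilon> + c2 - 1) / (1 - \<delta>)) = r1"
    unfolding r1_def D_def E_def ..
  have e3: "c2 / (c2 - c1) * (((1 - c1) * exp \<epsilon> + c2 - 1) / (exp \<epsilon> + (c2 - 1) / (1 - c1) * \<delta>)) = r2"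
    unfolding r2_def D_def E_def ..
  show ?thesis
    unfolding Let_def e1 e2 e3 PP_def[symmetric] Qs_def[symmetric]
    using mm sup QsS Vform unfolding Qs_def by simp
qed

end
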